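(* Let $K=\mathbb{F}_2(t)$ and let $\omega$ be a place of $K$ with $\omega\notin\{t,t^{-1}\}$. Then for $\operatorname{Re}(s)>1$, \[\widehat{f_\omega H_\omega}(s;\mathbbm{1})=1+\frac12\left(\frac{1}{2^{(s-1)\deg\omega}}\left(1+\frac{1-2^{-\deg\omega}}{2^{(s-1)\deg\omega}-1}\right)-\frac{1}{2^{s\deg\omega-1}}\right),\] equivalently \[\widehat{f_\omega H_\omega}(s;\mathbbm{1})=1+\frac12\cdot\frac{1}{2^{(s-1)\deg\omega}}\left(1-\frac{1}{2^{\deg\omega-1}}+\frac{1-2^{-\deg\omega}}{2^{(s-1)\deg\omega}(1-2^{-(s-1)\deg\omega})}\right).\]
   Context: $K_\omega$ is the completion of $K$ at $\omega$, $\mathcal{O}_\omega$ its ring of integers, $\mathrm{d}y$ the Haar measure on $K_\omega$ with $\mathcal{O}_\omega$ of volume $1$, $|y|_\omega=2^{-\deg\omega\cdot v_\omega(y)}$, $H_\omega(y)=\max\{1,|y|_\omega\}$. $f_\omega:K_\omega\to\{0,1\}$ is $f_\omega(y)=1$ if the conic $x_0^2+x_0x_1+yx_1^2=tx_2^2$ has a $K_\omega$-point and $0$ otherwise. $\widehat{f_\omega H_\omega}(s;\mathbbm{1})=\int_{K_\omega}f_\omega(y)H_\omega(y)^{-s}\,\mathrm{d}y$. *)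

theory Defs
  imports "HOL-Analysis.Analysis" "HOL-Library.Z2"
    "HOL-Computational_Algebra.Polynomial" "HOL-Computational_Algebra.Fraction_Field"
begin

text \<open>F_2 is the type bit, K = F_2(t) is bit poly fract.
  A place omega of K other than t and t^{-1} (the infinite place) is given by a
  monic irreducible polynomial pi in F_2[t] with pi different from t; deg omega = degree pi.
  The completion K_omega is modelled by pi-adic digit expansions
  y = sum over i of a_i pi^i, with digits a_i taken from the residues mod pi
  (polynomials of degree < deg pi) and a_i = 0 for all sufficiently negative i.
  This representation is unique, so K_omega is the set Kom pi below.\<close>

definition tpoly :: "bit poly" where
  "tpoly = [:0, 1:]"

definition Kom :: "bit poly \<Rightarrow> (int \<Rightarrow> bit poly) set" where
  "Kom p = {a. (\<forall>i. a i = a i mod p) \<and> (\<exists>N. \<forall>i<N. a i = 0)}"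

definition psum :: "bit poly \<Rightarrow> (int \<Rightarrow> bit poly) \<Rightarrow> int \<Rightarrow> bit poly fract" where
  "psum p a n = (\<Sum>i\<in>{i. i < n \<and> a i \<noteq> 0}. Fract (a i) 1 * (Fract p 1) powi i)"

text \<open>r in K lies in pi^M times the local ring at pi.\<close>
definition padic_small :: "bit poly \<Rightarrow> nat \<Rightarrow> bit poly fract \<Rightarrow> bool" where
  "padic_small p M r \<longleftrightarrow> (\<exists>a b. b \<noteq> 0 \<and> coprime b p \<and> p ^ M dvd a \<and> r = Fract a b)"

text \<open>The value of the quadratic form x0^2 + x0 x1 + y x1^2 - t x2^2 at the pi-adic
  truncations; the form vanishes at (x0,x1,x2) in K_omega iff these values tend to 0.\<close>
definition conic_trunc ::
  "bit poly \<Rightarrow> (int \<Rightarrow> bit poly) \<Rightarrow> (int \<Rightarrow> bit poly) \<Rightarrow> (int \<Rightarrow> bit poly) \<Rightarrow> (int \<Rightarrow> bit poly)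
     \<Rightarrow> nat \<Rightarrow> bit poly fract" where
  "conic_trunc p y x0 x1 x2 n =
     (psum p x0 (int n))^2 + psum p x0 (int n) * psum p x1 (int n)
     + psum p y (int n) * (psum p x1 (int n))^2 - Fract tpoly 1 * (psum p x2 (int n))^2"

definition conic_has_point :: "bit poly \<Rightarrow> (int \<Rightarrow> bit poly) \<Rightarrow> bool" where
  "conic_has_point p y \<longleftrightarrow>
     (\<exists>x0\<in>Kom p. \<exists>x1\<in>Kom p. \<exists>x2\<in>Kom p. \<not> (x0 = (\<lambda>_. 0) \<and> x1 = (\<lambda>_. 0) \<and> x2 = (\<lambda>_. 0)) \<and>
        (\<forall>M. \<forall>\<^sub>F n in sequentially. padic_small p M (conic_trunc p y x0 x1 x2 n)))"

definition f_om :: "bit poly \<Rightarrow> (int \<Rightarrow> bit poly) \<Rightarrow> real" where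
  "f_om p y = (if conic_has_point p y then 1 else 0)"

definition val_om :: "(int \<Rightarrow> bit poly) \<Rightarrow> int" where
  "val_om a = (THE i. a i \<noteq> 0 \<and> (\<forall>j<i. a j = 0))"

definition abs_om :: "bit poly \<Rightarrow> (int \<Rightarrow> bit poly) \<Rightarrow> real" where
  "abs_om p a = (if a = (\<lambda>_. 0) then 0 else 2 powr (- (real (degree p) * real_of_int (val_om a))))"

definition H_om :: "bit poly \<Rightarrow> (int \<Rightarrow> bit poly) \<Rightarrow> real" where
  "H_om p a = max 1 (abs_om p a)"

text \<open>Balls c + pi^n O_omega: elements whose digits below n agree with those of c.\<close>
definition ball_om :: "bit poly \<Rightarrow> (int \<Rightarrow> bit poly) \<Rightarrow> int \<Rightarrow> (int \<Rightarrow> bit poly) set" where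
  "ball_om p c n = {y \<in> Kom p. \<forall>i<n. y i = c i}"

text \<open>Haar measure on K_omega normalised by vol(O_omega) = 1 (Borel sets generated by
  the balls; a Haar measure gives c + pi^n O_omega volume 2^(-deg * n)).\<close>
definition haar_om :: "bit poly \<Rightarrow> (int \<Rightarrow> bit poly) measure \<Rightarrow> bool" where
  "haar_om p \<mu> \<longleftrightarrow>
     space \<mu> = Kom p \<and>
     sets \<mu> = sigma_sets (Kom p) {ball_om p c n | c n. c \<in> Kom p} \<and>
     (\<forall>c\<in>Kom p. \<forall>n. emeasure \<mu> (ball_om p c n) = ennreal (2 powr (- (real (degree p) * real_of_int n))))"

end

theory Submission
  imports Defs "HOL-Computational_Algebra.Polynomial_Factorial" "HOL-Computational_Algebra.Field_as_Ring"
begin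


instantiation bit ::
  "{unique_euclidean_ring, normalization_euclidean_semiring, normalization_semidom_multiplicative}"
begin
definition [simp]: "normalize_bit = (normalize_field :: bit \<Rightarrow> _)"
definition [simp]: "unit_factor_bit = (unit_factor_field :: bit \<Rightarrow> _)"
definition [simp]: "euclidean_size_bit = (euclidean_size_field :: bit \<Rightarrow> _)"
definition [simp]: "division_segment (x :: bit) = 1"
instance
  apply standard
  apply (simp_all add: dvd_field_iff field_split_simps split: if_splits)
  done
end

instantiation bit :: euclidean_ring_gcd
begin
definition gcd_bit :: "bit \<Rightarrow> bit \<Rightarrow> bit" where
  "gcd_bit = Euclidean_Algorithm.gcd"
definition lcm_bit :: "bit \<Rightarrow> bit \<Rightarrow> bit" where
  "lcm_bit = Euclidean_Algorithm.lcm"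
definition Gcd_bit :: "bit set \<Rightarrow> bit" where
 "Gcd_bit = Euclidean_Algorithm.Gcd"
definition Lcm_bit :: "bit set \<Rightarrow> bit" where
 "Lcm_bit = Euclidean_Algorithm.Lcm"
instance by standard (simp_all add: gcd_bit_def lcm_bit_def Gcd_bit_def Lcm_bit_def)
end

instance bit :: field_gcd ..

lemma c2_add_self: "(2::'a::comm_ring_1) = 0 \<Longrightarrow> x + x = (0::'a)"
  by (metis mult_2 mult_zero_left)
lemma c2_minus: "(2::'a::comm_ring_1) = 0 \<Longrightarrow> - x = (x::'a)"
  by (metis c2_add_self add_eq_0_iff2)
lemma c2_diff: "(2::'a::comm_ring_1) = 0 \<Longrightarrow> x - y = (x::'a) + y"
  by (metis c2_minus diff_conv_add_uminus)
lemma c2_sq: "(2::'a::comm_ring_1) = 0 \<Longrightarrow> (x + y)^2 = (x::'a)^2 + y^2"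
  by (simp add: power2_sum)

lemma bp2 [simp]: "(2::bit poly) = 0"
proof -
  have "(2::bit poly) = of_nat 2" by simp
  also have "\<dots> = [:of_nat 2:]" by (rule of_nat_poly)
  finally show ?thesis by simp
qed
lemma bf2 [simp]: "(2::bit poly fract) = 0"
proof -
  have "(2::bit poly fract) = of_nat 2" by simp
  also have "\<dots> = Fract (of_nat 2) 1" by (rule of_nat_fract)
  finally show ?thesis by (simp add: fract_collapse)
qed

lemma bp_minus [simp]: "- (x::bit poly) = x" by (rule c2_minus[OF bp2])
lemma bp_diff [simp]: "(x::bit poly) - y = x + y" by (rule c2_diff[OF bp2])
lemma bp_add_self [simp]: "(x::bit poly) + x = 0" by (rule c2_add_self[OF bp2])
lemma bp_sq: "((x::bit poly) + y)^2 = x^2 + y^2" by (rule c2_sq[OF bp2])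
lemma bf_minus [simp]: "- (x::bit poly fract) = x" by (rule c2_minus[OF bf2])
lemma bf_diff [simp]: "(x::bit poly fract) - y = x + y" by (rule c2_diff[OF bf2])
lemma bf_add_self [simp]: "(x::bit poly fract) + x = 0" by (rule c2_add_self[OF bf2])
lemma bf_sq: "((x::bit poly fract) + y)^2 = x^2 + y^2" by (rule c2_sq[OF bf2])

lemma bp_add_self2 [simp]: "(x::bit poly) + (x + y) = y"
  by (metis add.assoc add_0 bp_add_self)
lemma bf_add_self2 [simp]: "(x::bit poly fract) + (x + y) = y"
  by (metis add.assoc add_0 bf_add_self)

lemma bp_add_cancel: "(x::bit poly) + y = 0 \<longleftrightarrow> x = y"
  by (metis add.assoc add_0 bp_add_self)
lemma bf_add_cancel: "(x::bit poly fract) + y = 0 \<longleftrightarrow> x = y"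
  by (metis add.assoc add_0 bf_add_self)

section \<open>Square decomposition\<close>

lemma sq_const: "[:a::bit:]^2 = [:a:]"
  by (cases a) (simp_all add: power2_eq_square)

lemma decomp_ex: "\<exists>A B. (N::bit poly) = A^2 + tpoly * B^2"
proof (induction N)
  case 0
  then show ?case by (intro exI[of _ 0]) simp
next
  case (pCons a N)
  then obtain A B where AB: "N = A^2 + tpoly * B^2" by blast
  have "pCons a N = [:a:] + tpoly * N"
    by (simp add: tpoly_def)
  also have "\<dots> = ([:a:] + tpoly * B)^2 + tpoly * A^2"
    by (simp add: AB bp_sq sq_const power_mult_distrib algebra_simps power2_eq_square)
  finally show ?case by blast
qed

lemma degree_tpoly [simp]: "degree tpoly = 1"
  by (simp add: tpoly_def)
lemma tpoly_nz [simp]: "tpoly \<noteq> 0"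
  by (simp add: tpoly_def)

lemma decomp_zero:
  assumes "(A::bit poly)^2 + tpoly * B^2 = 0" shows "A = 0 \<and> B = 0"
proof -
  have e: "A^2 = tpoly * B^2" using assms bp_add_cancel by blast
  have "B = 0"
  proof (rule ccontr)
    assume "B \<noteq> 0"
    then have "degree (tpoly * B^2) = 1 + 2 * degree B"
      by (simp add: degree_mult_eq degree_power_eq)
    moreover have "A \<noteq> 0" using e \<open>B \<noteq> 0\<close> by auto
    then have "degree (A^2) = 2 * degree A"
      by (simp add: degree_power_eq)
    moreover have "degree (A^2) = degree (tpoly * B^2)" using e by simp
    ultimately show False by presburger
  qed
  with e show ?thesis by simp
qed

definition cpart :: "bit poly \<Rightarrow> bit poly" where
  "cpart N = (SOME A. \<exists>B. N = A^2 + tpoly * B^2)"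
definition dpart :: "bit poly \<Rightarrow> bit poly" where
  "dpart N = (SOME B. N = (cpart N)^2 + tpoly * B^2)"

lemma decomp: "N = (cpart N)^2 + tpoly * (dpart N)^2"
proof -
  have "\<exists>B. N = (cpart N)^2 + tpoly * B^2"
    unfolding cpart_def using decomp_ex[of N] by (rule someI_ex)
  then show ?thesis unfolding dpart_def by (rule someI_ex)
qed

lemma decomp_unique:
  assumes "N = A^2 + tpoly * B^2"
  shows "cpart N = A" "dpart N = B"
proof -
  have "(cpart N + A)^2 + tpoly * (dpart N + B)^2 = 0"
    using decomp[of N] assms by (simp add: bp_sq algebra_simps)
  from decomp_zero[OF this] show "cpart N = A" "dpart N = B"
    by (simp_all add: bp_add_cancel)
qed

lemma cpart_add: "cpart (M + N) = cpart M + cpart N"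
  and dpart_add: "dpart (M + N) = dpart M + dpart N"
proof -
  have "M + N = (cpart M + cpart N)^2 + tpoly * (dpart M + dpart N)^2"
    using decomp[of M] decomp[of N] by (simp add: bp_sq algebra_simps)
  from decomp_unique[OF this] show "cpart (M + N) = cpart M + cpart N"
    "dpart (M + N) = dpart M + dpart N" by simp_all
qed

lemma cpart_sq [simp]: "cpart (A^2) = A"
  using decomp_unique[of "A^2" A 0] by simp
lemma cpart_tsq [simp]: "cpart (tpoly * B^2) = 0"
  using decomp_unique[of "tpoly * B^2" 0 B] by simp
lemma cpart_0 [simp]: "cpart 0 = 0"
  using cpart_sq[of 0] by simp
lemma cpart_mult_sq: "cpart (N * M^2) = cpart N * M"
proof -
  have "N * M^2 = (cpart N * M)^2 + tpoly * (dpart N * M)^2"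
    by (subst decomp[of N]) (simp add: algebra_simps power_mult_distrib)
  from decomp_unique(1)[OF this] show ?thesis .
qed

lemma pderiv_sq [simp]: "pderiv ((A::bit poly)^2) = 0"
  by (simp add: power2_eq_square pderiv_mult)

lemma pderiv_tpoly [simp]: "pderiv tpoly = 1"
  by (simp add: tpoly_def pderiv_pCons)

lemma pderiv_decomp: "pderiv N = (dpart N)^2"
proof -
  have "pderiv N = pderiv ((cpart N)^2 + tpoly * (dpart N)^2)"
    by (subst decomp[of N]) simp
  also have "\<dots> = (dpart N)^2"
    by (simp add: pderiv_add pderiv_mult)
  finally show ?thesis .
qed


lemma degree_pderiv_less: "degree (p::bit poly) > 0 \<Longrightarrow> degree (pderiv p) < degree p"
proof -
  assume "degree p > 0"
  have "degree (pderiv p) \<le> degree p - 1"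
  proof (rule degree_le, intro allI impI)
    fix i assume "degree p - 1 < i"
    then have "coeff p (Suc i) = 0" by (intro coeff_eq_0) simp
    then show "coeff (pderiv p) i = 0" by (simp add: coeff_pderiv)
  qed
  with \<open>degree p > 0\<close> show ?thesis by simp
qed

lemma UNIV_bit: "(UNIV :: bit set) = {0, 1}" by (auto intro: bit.exhaust)
lemma finite_UNIV_bit [simp]: "finite (UNIV :: bit set)" by (simp add: UNIV_bit)

lemma card_bit: "card (UNIV :: bit set) = 2"
proof -
  have "(UNIV :: bit set) = {0, 1}" by (auto intro: bit.exhaust)
  then have "card (UNIV :: bit set) = card ({0, 1} :: bit set)" by (rule arg_cong)
  then show ?thesis by simp
qed

locale pl =
  fixes p :: "bit poly"
  assumes irr: "irreducible p" and ntp: "p \<noteq> tpoly"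
begin

lemma p_nz [simp]: "p \<noteq> 0"
  using irr by auto

lemma prime_p: "prime_elem p"
  using irr irreducible_imp_prime_elem by blast

lemma p_not_unit: "\<not> is_unit p"
  using irr irreducible_not_unit by blast

lemma deg_p: "degree p > 0"
  using p_not_unit is_unit_iff_degree[OF p_nz] by simp

lemma p_dvd_mult: "p dvd a * b \<Longrightarrow> p dvd a \<or> p dvd b"
  using prime_p prime_elem_dvd_mult_iff by blast

lemma p_dvd_power: "p dvd a ^ n \<Longrightarrow> p dvd a"
  using prime_p prime_elem_dvd_power by blast

lemma p_not_dvd_t: "\<not> p dvd tpoly"
proof
  assume "p dvd tpoly"
  then obtain k where k: "tpoly = p * k" by (elim dvdE)
  then have "k \<noteq> 0" by auto
  have "degree tpoly = degree (p * k)" using k by simp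
  also have "\<dots> = degree p + degree k" using \<open>k \<noteq> 0\<close> by (simp add: degree_mult_eq)
  finally have "degree tpoly = degree p + degree k" .
  then have "degree k = 0" using deg_p by simp
  then obtain c where c: "k = [:c:]" by (metis degree_eq_zeroE)
  with \<open>k \<noteq> 0\<close> have "c = 1" by simp
  then show False using k c ntp by simp
qed

lemma p_not_dvd_pderiv: "\<not> p dvd pderiv p"
proof
  assume a: "p dvd pderiv p"
  have "pderiv p = 0"
  proof (rule ccontr)
    assume "pderiv p \<noteq> 0"
    with a have "degree p \<le> degree (pderiv p)" by (rule dvd_imp_degree_le)
    with degree_pderiv_less[OF deg_p] show False by simp
  qed
  then have "dpart p = 0" using pderiv_decomp[of p] by simp
  then have "p = cpart p * cpart p" using decomp[of p] by (simp add: power2_eq_square)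
  then obtain A where A: "p = A * A" by blast
  then have "is_unit A \<or> is_unit A" by (rule irreducibleD[OF irr])
  then have "is_unit (A * A)" using is_unit_mult_iff by blast
  then have "is_unit p" using A by simp
  with p_not_unit show False by simp
qed

definition Dig :: "bit poly set" where "Dig = {u. u mod p = u}"

lemma Dig_iff: "u \<in> Dig \<longleftrightarrow> u = 0 \<or> degree u < degree p"
proof
  assume "u \<in> Dig"
  then have e: "u mod p = u" by (simp add: Dig_def)
  show "u = 0 \<or> degree u < degree p"
  proof (cases "u = 0")
    case False
    then have "u mod p \<noteq> 0" using e by simp
    from degree_mod_less'[OF p_nz this] e show ?thesis by simp
  qed simp
next
  assume "u = 0 \<or> degree u < degree p"
  then show "u \<in> Dig" by (auto simp: Dig_def intro: mod_poly_less)
qed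

lemma mod_Dig [simp]: "u mod p \<in> Dig"
  by (simp add: Dig_def)

lemma Dig_0 [simp]: "0 \<in> Dig"
  by (simp add: Dig_def)

lemma Dig_mod [simp]: "u \<in> Dig \<Longrightarrow> u mod p = u"
  by (simp add: Dig_def)

lemma Dig_add [simp]:
  assumes "u \<in> Dig" "v \<in> Dig" shows "u + v \<in> Dig"
proof -
  have "(u + v) mod p = u + v" using assms by (simp add: poly_mod_add_left)
  then show ?thesis by (simp add: Dig_def del: Dig_mod)
qed

lemma Dig_dvd: "u \<in> Dig \<Longrightarrow> p dvd u \<Longrightarrow> u = 0"
  by (metis Dig_mod dvd_imp_mod_0)

lemma Dig_eq: "u \<in> Dig \<Longrightarrow> v \<in> Dig \<Longrightarrow> p dvd (u + v) \<Longrightarrow> u = v"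
  using Dig_dvd[of "u + v"] bp_add_cancel by simp

lemma mod_eq_iff_dvd: "u mod p = v mod p \<longleftrightarrow> p dvd (u + v)"
  using mod_eq_dvd_iff[of u p v] by simp

lemma finite_Dig: "finite Dig" and card_Dig: "card Dig = 2 ^ degree p"
proof -
  define f where "f u = map (coeff u) [0..<degree p]" for u :: "bit poly"
  have inj: "inj_on f Dig"
  proof (rule inj_onI)
    fix u v assume u: "u \<in> Dig" and v: "v \<in> Dig" and e: "f u = f v"
    show "u = v"
    proof (rule poly_eqI)
      fix i
      show "coeff u i = coeff v i"
      proof (cases "i < degree p")
        case True
        have "f u ! i = coeff u i" "f v ! i = coeff v i" using True by (simp_all add: f_def)
        then show ?thesis using e by simp
      next
        case False
        then have "coeff u i = 0" "coeff v i = 0" using u v unfolding Dig_iff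
          by (auto intro: coeff_eq_0)
        then show ?thesis by simp
      qed
    qed
  qed
  have img: "f ` Dig = {xs. set xs \<subseteq> UNIV \<and> length xs = degree p}"
  proof
    show "f ` Dig \<subseteq> {xs. set xs \<subseteq> UNIV \<and> length xs = degree p}"
      by (auto simp: f_def)
    show "{xs. set xs \<subseteq> UNIV \<and> length xs = degree p} \<subseteq> f ` Dig"
    proof
      fix xs :: "bit list" assume "xs \<in> {xs. set xs \<subseteq> UNIV \<and> length xs = degree p}"
      then have l: "length xs = degree p" by simp
      have "Poly xs \<in> Dig"
      proof -
        have "degree (Poly xs) \<le> length xs" by (rule degree_Poly)
        have "Poly xs = 0 \<or> degree (Poly xs) < degree p"
        proof (cases "Poly xs = 0")
          case False
          have "coeff (Poly xs) (degree (Poly xs)) \<noteq> 0" using False by (rule leading_coeff_neq_0)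
          then have "nth_default 0 xs (degree (Poly xs)) \<noteq> 0" by (metis coeff_Poly_eq)
          then have "\<not> length xs \<le> degree (Poly xs)" using nth_default_beyond by metis
          then have "degree (Poly xs) < length xs" by simp
          then show ?thesis using l by simp
        qed simp
        then show ?thesis by (simp add: Dig_iff)
      qed
      moreover have "f (Poly xs) = xs"
        unfolding f_def using l
        by (intro nth_equalityI) (auto simp: nth_default_def)
      ultimately show "xs \<in> f ` Dig" by (metis image_eqI)
    qed
  qed
  have fin: "finite {xs :: bit list. set xs \<subseteq> UNIV \<and> length xs = degree p}"
    by (rule finite_lists_length_eq) simp
  show "finite Dig" using fin img inj by (metis finite_imageD)
  have "card Dig = card (f ` Dig)" using inj by (simp add: card_image)
  also have "\<dots> = 2 ^ degree p" using img card_lists_length_eq[of "UNIV :: bit set" "degree p"]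
    by (simp add: card_bit)
  finally show "card Dig = 2 ^ degree p" .
qed

end



context pl
begin

definition c0 :: "bit poly" where "c0 = (tpoly * pderiv p) mod p"
definition Lmap :: "bit poly \<Rightarrow> bit poly" where "Lmap u = (u + cpart (u * p)) mod p"
definition W :: "bit poly set" where "W = Lmap ` Dig"
definition lam1 :: "bit poly \<Rightarrow> bool" where "lam1 u = (u mod p \<notin> W)"

lemma key_cong: "p dvd ((cpart (u * p))^2 + tpoly * pderiv p * u)"
proof -
  define A where "A = cpart (u * p)"
  define B where "B = dpart (u * p)"
  have e1: "u * p = A^2 + tpoly * B^2" unfolding A_def B_def by (rule decomp)
  have e2: "B^2 = u * pderiv p + p * pderiv u"
    using pderiv_decomp[of "u * p"] unfolding B_def by (simp add: pderiv_mult)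
  have e3: "A^2 = u * p + tpoly * B^2" using e1 by simp
  have "A^2 + tpoly * pderiv p * u = u * p + tpoly * (u * pderiv p + p * pderiv u) + tpoly * pderiv p * u"
    by (simp add: e3 e2)
  also have "\<dots> = p * (u + tpoly * pderiv u)"
    by (simp add: algebra_simps)
  finally show ?thesis unfolding A_def by simp
qed

lemma c0_Dig [simp]: "c0 \<in> Dig" by (simp add: c0_def)

lemma c0_nz: "c0 \<noteq> 0"
proof
  assume "c0 = 0"
  then have "p dvd tpoly * pderiv p" by (simp add: c0_def mod_eq_0_iff_dvd)
  then show False using p_dvd_mult p_not_dvd_t p_not_dvd_pderiv by blast
qed

lemma Lmap_Dig [simp]: "Lmap u \<in> Dig" by (simp add: Lmap_def)

lemma Lmap_add: "Lmap (u + v) = Lmap u + Lmap v"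
  by (simp add: Lmap_def distrib_right cpart_add poly_mod_add_left algebra_simps)

lemma Lmap_0 [simp]: "Lmap 0 = 0" by (simp add: Lmap_def)

lemma Lmap_zero_iff:
  assumes u: "u \<in> Dig" shows "Lmap u = 0 \<longleftrightarrow> u = 0 \<or> u = c0"
proof
  assume "Lmap u = 0"
  then have d1: "p dvd (u + cpart (u * p))" by (simp add: Lmap_def mod_eq_0_iff_dvd)
  then have "p dvd (u + cpart (u * p))^2" by (simp add: power2_eq_square)
  then have "p dvd (u^2 + (cpart (u * p))^2)" by (simp add: bp_sq)
  then have "p dvd (u^2 + (cpart (u * p))^2) + ((cpart (u * p))^2 + tpoly * pderiv p * u)"
    using key_cong by (rule dvd_add)
  then have "p dvd u * (u + tpoly * pderiv p)"
    by (simp add: algebra_simps power2_eq_square)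
  then have "p dvd u \<or> p dvd (u + tpoly * pderiv p)" by (rule p_dvd_mult)
  then show "u = 0 \<or> u = c0"
  proof
    assume "p dvd u" then show ?thesis using Dig_dvd u by blast
  next
    assume "p dvd (u + tpoly * pderiv p)"
    then have "u mod p = (tpoly * pderiv p) mod p" by (simp add: mod_eq_iff_dvd)
    then show ?thesis using u by (simp add: c0_def)
  qed
next
  assume "u = 0 \<or> u = c0"
  then show "Lmap u = 0"
  proof
    assume "u = 0" then show ?thesis by simp
  next
    assume uc: "u = c0"
    define A where "A = cpart (u * p)"
    have k: "p dvd A^2 + tpoly * pderiv p * u" using key_cong unfolding A_def .
    have "p dvd (c0 + tpoly * pderiv p)"
      using mod_eq_iff_dvd[of c0 "tpoly * pderiv p"] by (simp add: c0_def)
    then have "p dvd u * (c0 + tpoly * pderiv p)" by simp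
    with k have "p dvd (A^2 + tpoly * pderiv p * u) + u * (c0 + tpoly * pderiv p)"
      by (rule dvd_add)
    then have "p dvd (A + u)^2" using uc by (simp add: bp_sq algebra_simps power2_eq_square)
    then have "p dvd (A + u)" by (rule p_dvd_power)
    then show ?thesis by (simp add: Lmap_def A_def mod_eq_0_iff_dvd add.commute)
  qed
qed

lemma Lmap_eq_iff:
  assumes "u \<in> Dig" "v \<in> Dig"
  shows "Lmap u = Lmap v \<longleftrightarrow> v = u \<or> v = u + c0"
proof -
  have "Lmap u = Lmap v \<longleftrightarrow> Lmap (u + v) = 0" by (simp add: Lmap_add bp_add_cancel)
  also have "\<dots> \<longleftrightarrow> u + v = 0 \<or> u + v = c0" using assms by (simp add: Lmap_zero_iff)
  also have "\<dots> \<longleftrightarrow> v = u \<or> v = u + c0"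
    by (metis bp_add_cancel bp_add_self2)
  finally show ?thesis .
qed

lemma W_sub: "W \<subseteq> Dig" by (auto simp: W_def)
lemma finite_W: "finite W" using W_sub finite_Dig finite_subset by blast
lemma W_0 [simp]: "0 \<in> W" unfolding W_def by (rule image_eqI[of _ _ 0]) simp_all
lemma W_add: "w1 \<in> W \<Longrightarrow> w2 \<in> W \<Longrightarrow> w1 + w2 \<in> W"
proof -
  assume "w1 \<in> W" "w2 \<in> W"
  then obtain a b where "a \<in> Dig" "b \<in> Dig" "w1 = Lmap a" "w2 = Lmap b" by (auto simp: W_def)
  then have "w1 + w2 = Lmap (a + b)" "a + b \<in> Dig" by (simp_all add: Lmap_add)
  then show ?thesis unfolding W_def by blast
qed

lemma card_Dig_W: "card Dig = 2 * card W"
proof -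
  define F where "F w = {u \<in> Dig. Lmap u = w}" for w
  have U: "Dig = (\<Union>w\<in>W. F w)" by (auto simp: F_def W_def)
  have c2: "card (F w) = 2" if "w \<in> W" for w
  proof -
    obtain u0 where u0: "u0 \<in> Dig" "w = Lmap u0" using \<open>w \<in> W\<close> by (auto simp: W_def)
    have d2: "u0 + c0 \<in> Dig" using u0 by simp
    have iff: "Lmap x = w \<longleftrightarrow> (x = u0 \<or> x = u0 + c0)" if "x \<in> Dig" for x
    proof -
      have "Lmap x = w \<longleftrightarrow> Lmap u0 = Lmap x" unfolding u0(2) by (rule eq_commute)
      also have "\<dots> \<longleftrightarrow> (x = u0 \<or> x = u0 + c0)" by (rule Lmap_eq_iff[OF u0(1) that])
      finally show ?thesis .
    qed
    have "F w = {u0, u0 + c0}"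
    proof (intro equalityI subsetI)
      fix x assume "x \<in> F w"
      then have "x \<in> Dig" "Lmap x = w" by (simp_all add: F_def)
      then show "x \<in> {u0, u0 + c0}" using iff by blast
    next
      fix x assume "x \<in> {u0, u0 + c0}"
      then have "x \<in> Dig" using d2 u0(1) by blast
      moreover have "Lmap x = w" using iff[OF \<open>x \<in> Dig\<close>] \<open>x \<in> {u0, u0 + c0}\<close> by blast
      ultimately show "x \<in> F w" by (simp add: F_def)
    qed
    moreover have "u0 \<noteq> u0 + c0"
    proof
      assume "u0 = u0 + c0"
      then have "u0 + u0 = u0 + (u0 + c0)" by simp
      then show False using c0_nz by (simp only: bp_add_self bp_add_self2) simp
    qed
    ultimately show ?thesis by simp
  qed
  have "card Dig = (\<Sum>w\<in>W. card (F w))"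
    unfolding U
  proof (rule card_UN_disjoint)
    show "finite W" by (rule finite_W)
    show "\<forall>i\<in>W. finite (F i)" using finite_Dig by (auto simp: F_def)
    show "\<forall>i\<in>W. \<forall>j\<in>W. i \<noteq> j \<longrightarrow> F i \<inter> F j = {}" by (auto simp: F_def)
  qed
  also have "\<dots> = (\<Sum>w\<in>W. 2)" using c2 by simp
  finally show ?thesis by simp
qed

lemma card_W: "card W = 2 ^ (degree p - 1)"
proof -
  have "(2::nat) ^ degree p = 2 * 2 ^ (degree p - 1)" using deg_p by (cases "degree p") simp_all
  then have "2 * card W = 2 * 2 ^ (degree p - 1)"
    using card_Dig_W card_Dig by simp
  then show ?thesis by simp
qed

lemma exists_nonW: "\<exists>w\<in>Dig. w \<notin> W"
proof (rule ccontr)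
  assume "\<not> ?thesis"
  then have "Dig \<subseteq> W" by auto
  then have "card Dig \<le> card W" using finite_W by (rule card_mono[rotated])
  moreover have "card Dig > 0" using card_Dig by simp
  ultimately show False using card_Dig_W by simp
qed

lemma nonW_add:
  assumes u: "u \<in> Dig" "u \<notin> W" and v: "v \<in> Dig" "v \<notin> W"
  shows "u + v \<in> W"
proof -
  obtain w where w: "w \<in> Dig" "w \<notin> W" using exists_nonW by blast
  define g where "g x = x + w" for x
  have inj: "inj_on g W" by (rule inj_onI) (simp add: g_def)
  have sub: "g ` W \<subseteq> Dig - W"
  proof
    fix y assume "y \<in> g ` W"
    then obtain x where x: "x \<in> W" "y = x + w" by (auto simp: g_def)
    have "y \<in> Dig" using x w W_sub by auto
    moreover have "y \<notin> W"
    proof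
      assume "y \<in> W"
      then have "x + y \<in> W" using x W_add by blast
      then show False using x w by simp
    qed
    ultimately show "y \<in> Dig - W" by simp
  qed
  have "card (g ` W) = card W" using inj by (rule card_image)
  also have "card W = card (Dig - W)"
    using card_Dig_W card_Diff_subset[OF finite_W W_sub] by simp
  finally have "g ` W = Dig - W"
    using card_subset_eq[OF _ sub] finite_Dig by blast
  then obtain x y where "x \<in> W" "u = x + w" "y \<in> W" "v = y + w"
    using u v by (metis DiffI image_iff g_def)
  then show ?thesis using W_add by (simp add: algebra_simps)
qed

lemma lam1_add: "lam1 (u + v) = (lam1 u \<noteq> lam1 v)"
proof -
  define u' v' where "u' = u mod p" and "v' = v mod p"
  have d: "u' \<in> Dig" "v' \<in> Dig" by (simp_all add: u'_def v'_def)
  have m: "(u + v) mod p = u' + v'" by (simp add: u'_def v'_def poly_mod_add_left)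
  show ?thesis unfolding lam1_def m u'_def[symmetric] v'_def[symmetric]
  proof (cases "u' \<in> W"; cases "v' \<in> W")
    assume "u' \<in> W" "v' \<in> W" then show "(u' + v' \<notin> W) = ((u' \<notin> W) \<noteq> (v' \<notin> W))" using W_add by auto
  next
    assume a: "u' \<in> W" "v' \<notin> W"
    have "u' + v' \<notin> W"
    proof
      assume "u' + v' \<in> W" then have "u' + (u' + v') \<in> W" using a W_add by blast
      then show False using a by simp
    qed
    then show "(u' + v' \<notin> W) = ((u' \<notin> W) \<noteq> (v' \<notin> W))" using a by auto
  next
    assume a: "u' \<notin> W" "v' \<in> W"
    have "u' + v' \<notin> W"
    proof
      assume "u' + v' \<in> W" then have "(u' + v') + v' \<in> W" using a W_add by blast
      then show False using a by (simp add: add.assoc)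
    qed
    then show "(u' + v' \<notin> W) = ((u' \<notin> W) \<noteq> (v' \<notin> W))" using a by auto
  next
    assume a: "u' \<notin> W" "v' \<notin> W"
    then show "(u' + v' \<notin> W) = ((u' \<notin> W) \<noteq> (v' \<notin> W))" using nonW_add d by auto
  qed
qed

lemma lam1_0 [simp]: "lam1 0 = False" by (simp add: lam1_def)
lemma lam1_pmult [simp]: "lam1 (p * k) = False" "lam1 (k * p) = False"
  by (simp_all add: lam1_def)
lemma lam1_mod [simp]: "lam1 (u mod p) = lam1 u" by (simp add: lam1_def)

lemma lam1_psi: "lam1 (cpart (u * p)) = lam1 u"
proof -
  define u' where "u' = u mod p"
  define k where "k = u div p"
  have u: "u = u' + k * p" unfolding u'_def k_def by (simp add: div_mult_mod_eq add.commute)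
  have c: "cpart (u * p) = cpart (u' * p) + cpart k * p"
  proof -
    have "u * p = u' * p + k * p^2" by (subst u) (simp add: algebra_simps power2_eq_square)
    then show ?thesis by (simp add: cpart_add cpart_mult_sq)
  qed
  have "Lmap u' \<in> W" by (simp add: W_def u'_def)
  then have "lam1 (u' + cpart (u' * p)) = False" by (simp add: lam1_def Lmap_def)
  then have "lam1 u' = lam1 (cpart (u' * p))" by (simp add: lam1_add)
  moreover have "lam1 (cpart (u * p)) = lam1 (cpart (u' * p))" by (simp add: c lam1_add)
  moreover have "lam1 u' = lam1 u" by (simp add: u'_def)
  ultimately show ?thesis by simp
qed

function (sequential) Lam :: "bit poly \<Rightarrow> nat \<Rightarrow> bool" where
  "Lam N 0 = False"
| "Lam N (Suc 0) = lam1 N"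
| "Lam N (Suc (Suc n)) = (if even n then Lam (cpart N) (Suc (n div 2))
      else Lam (cpart (N * p)) (Suc (Suc (n div 2))))"
  by pat_completeness auto
termination
  apply (relation "Wellfounded.measure snd")
  apply auto
  apply presburger
  done

lemma Lam_add: "Lam (N + M) n = (Lam N n \<noteq> Lam M n)"
proof (induction N n arbitrary: M rule: Lam.induct)
  case (1 N) then show ?case by simp
next
  case (2 N) then show ?case by (simp add: lam1_add)
next
  case (3 N n) then show ?case by (simp add: cpart_add distrib_right)
qed

lemma Lam_zero [simp]: "Lam 0 n = False"
  using Lam_add[of 0 0 n] by simp

lemma Lam_shift: "Lam (N * p) (Suc n) = Lam N n"
proof (induction n arbitrary: N rule: less_induct)
  case (less n)
  show ?case
  proof (cases n)
    case 0 then show ?thesis by simp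
  next
    case (Suc m)
    show ?thesis
    proof (cases m)
      case 0 then show ?thesis using Suc by (simp add: lam1_psi)
    next
      case (Suc k)
      note nk = \<open>n = Suc m\<close>
      show ?thesis
      proof (cases "even k")
        case False
        then have "Suc k div 2 = Suc (k div 2)" by presburger
        then show ?thesis using nk Suc False by simp
      next
        case True
        have kd: "Suc k div 2 = k div 2" using True by presburger
        have "Lam (N * p) (Suc n) = Lam (cpart (N * p * p)) (Suc (Suc (k div 2)))"
          using nk Suc True kd by simp
        also have "cpart (N * p * p) = cpart N * p"
          using cpart_mult_sq[of N p] by (simp add: power2_eq_square mult.assoc)
        also have "Lam (cpart N * p) (Suc (Suc (k div 2))) = Lam (cpart N) (Suc (k div 2))"
          by (rule less.IH) (simp add: nk Suc)
        also have "\<dots> = Lam N n" using nk Suc True by simp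
        finally show ?thesis .
      qed
    qed
  qed
qed

lemma Lam_shift_pow: "Lam (N * p ^ k) (n + k) = Lam N n"
proof (induction k arbitrary: n)
  case 0 then show ?case by simp
next
  case (Suc k)
  have e: "N * p ^ Suc k = (N * p ^ k) * p" by (simp add: algebra_simps)
  have "Lam (N * p ^ Suc k) (n + Suc k) = Lam ((N * p ^ k) * p) (Suc (n + k))"
    by (simp only: e add_Suc_right)
  also have "\<dots> = Lam (N * p ^ k) (n + k)" by (rule Lam_shift)
  finally show ?case using Suc by simp
qed

lemma Lam_vanish: "Lam (M * p ^ n) n = False"
  using Lam_shift_pow[of M n 0] by simp

lemma Lam_mod: "p ^ n dvd (N + N') \<Longrightarrow> Lam N n = Lam N' n"
proof -
  assume "p ^ n dvd (N + N')"
  then obtain M where "N + N' = p ^ n * M" by (elim dvdE)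
  then have "Lam (N + N') n = False" using Lam_vanish[of M n] by (simp add: mult.commute)
  then show ?thesis by (simp add: Lam_add)
qed

lemma Lam_sq: "Lam (N^2) (2 * m) = Lam N m"
proof (cases m)
  case (Suc k)
  have "2 * m = Suc (Suc (2 * k))" using Suc by simp
  then show ?thesis using Suc by simp
qed simp

lemma Lam_tsq: "Lam (tpoly * M^2) (2 * m) = False"
proof (cases m)
  case (Suc k)
  have "2 * m = Suc (Suc (2 * k))" using Suc by simp
  then show ?thesis using Suc by simp
qed simp

lemma Lam_one: "Lam N (Suc 0) = lam1 N" by simp

lemma Lam_top: "Lam (u * p ^ n) (Suc n) = lam1 u"
  using Lam_shift_pow[of u n 1] by simp

end


lemma Fract_add1 [simp]: "Fract a 1 + Fract b 1 = Fract (a + b) (1::bit poly)" by simp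
lemma Fract_mult1 [simp]: "Fract a 1 * Fract b 1 = Fract (a * b) (1::bit poly)" by simp
lemma Fract_pow1: "Fract a 1 ^ n = Fract (a ^ n) (1::bit poly)"
  by (induction n) (simp_all add: fract_collapse)
lemma Fract_eq0_iff: "b \<noteq> 0 \<Longrightarrow> Fract a b = 0 \<longleftrightarrow> a = (0::bit poly)"
  by (simp add: Zero_fract_def eq_fract)
lemma Fract_as_div: "b \<noteq> 0 \<Longrightarrow> Fract a b = Fract a 1 / Fract b (1::bit poly)"
  by simp
lemma Fract_pow: "Fract a b ^ n = Fract (a ^ n) ((b::bit poly) ^ n)"
  by (induction n) (simp_all add: fract_collapse)

lemma bezout_bp:
  assumes "coprime (b::bit poly) c" shows "\<exists>S T. S * b + T * c = 1"
proof -
  have "fst (bezout_coefficients b c) * b + snd (bezout_coefficients b c) * c = gcd b c"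
    by (rule bezout_coefficients_fst_snd)
  also have "gcd b c = 1" using assms by (simp add: coprime_iff_gcd_eq_1)
  finally show ?thesis by blast
qed

context pl
begin

abbreviation Pf :: "bit poly fract" where "Pf \<equiv> Fract p 1"

lemma Pf_nz [simp]: "Pf \<noteq> 0" by (simp add: Fract_eq0_iff)

lemma Pf_powi_nat: "Pf powi (int n) = Fract (p ^ n) 1"
  by (simp add: Fract_pow1)

lemma Pf_powi_add: "Pf powi (j + k) = Pf powi j * Pf powi k"
  by (rule power_int_add) simp

lemma Pf_powi_neg_nat: "Pf powi (- int n) = Fract 1 (p ^ n)"
  by (simp add: power_int_minus Fract_pow1)

lemma coprime_pow_p: "\<not> p dvd b \<Longrightarrow> coprime (p ^ n) b"
  using prime_elem_imp_coprime[OF prime_p] by simp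

definition vge :: "int \<Rightarrow> bit poly fract \<Rightarrow> bool" where
  "vge k r \<longleftrightarrow> (\<exists>a b. b \<noteq> 0 \<and> \<not> p dvd b \<and> r = Fract a b * Pf powi k)"

lemma vgeI: "\<not> p dvd b \<Longrightarrow> r = Fract a b * Pf powi k \<Longrightarrow> vge k r"
  unfolding vge_def by (metis dvd_0_right)

lemma vgeE:
  assumes "vge k r"
  obtains a b where "b \<noteq> 0" "\<not> p dvd b" "r = Fract a b * Pf powi k"
  using assms unfolding vge_def by blast

lemma vge_0 [simp]: "vge k 0"
  by (rule vgeI[of 1 _ 0]) (simp_all add: fract_collapse p_not_unit)

lemma vge_Pk: "vge k (Pf powi k)"
  by (rule vgeI[of 1 _ 1]) (simp_all add: fract_collapse p_not_unit)

lemma vge_frac: "\<not> p dvd b \<Longrightarrow> vge 0 (Fract a b)"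
  by (rule vgeI[of b _ a]) simp_all

lemma vge_poly [simp]: "vge 0 (Fract a 1)"
  by (rule vge_frac) (simp add: p_not_unit)

lemma vge_add:
  assumes "vge k r" "vge k s" shows "vge k (r + s)"
proof -
  obtain a b where ab: "b \<noteq> 0" "\<not> p dvd b" "r = Fract a b * Pf powi k" using assms(1) by (rule vgeE)
  obtain c d where cd: "d \<noteq> 0" "\<not> p dvd d" "s = Fract c d * Pf powi k" using assms(2) by (rule vgeE)
  have "r + s = Fract (a * d + c * b) (b * d) * Pf powi k"
    using ab cd by (simp flip: distrib_right)
  moreover have "\<not> p dvd b * d" using ab cd p_dvd_mult by blast
  ultimately show ?thesis by (intro vgeI)
qed

lemma vge_mult:
  assumes "vge j r" "vge k s" shows "vge (j + k) (r * s)"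
proof -
  obtain a b where ab: "b \<noteq> 0" "\<not> p dvd b" "r = Fract a b * Pf powi j" using assms(1) by (rule vgeE)
  obtain c d where cd: "d \<noteq> 0" "\<not> p dvd d" "s = Fract c d * Pf powi k" using assms(2) by (rule vgeE)
  have "r * s = Fract (a * c) (b * d) * Pf powi (j + k)"
    using ab cd by (simp add: Pf_powi_add algebra_simps)
  moreover have "\<not> p dvd b * d" using ab cd p_dvd_mult by blast
  ultimately show ?thesis by (intro vgeI)
qed

lemma vge_mono:
  assumes "vge k r" "j \<le> k" shows "vge j r"
proof -
  obtain a b where ab: "b \<noteq> 0" "\<not> p dvd b" "r = Fract a b * Pf powi k" using assms(1) by (rule vgeE)
  have "Pf powi k = Pf powi (k - j) * Pf powi j" using Pf_powi_add[of "k - j" j] by simp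
  also have "Pf powi (k - j) = Fract (p ^ nat (k - j)) 1"
    using Pf_powi_nat[of "nat (k - j)"] assms(2) by simp
  finally have "r = Fract (a * p ^ nat (k - j)) b * Pf powi j"
    using ab by (simp add: mult.assoc)
  then show ?thesis using ab by (intro vgeI)
qed

lemma vge_mult_poly: "vge k r \<Longrightarrow> vge k (r * Fract a 1)"
  using vge_mult[of k r 0 "Fract a 1"] by simp

lemma vge_mult_O: "vge k r \<Longrightarrow> vge 0 s \<Longrightarrow> vge k (r * s)"
  using vge_mult[of k r 0 s] by simp

lemma vge_shift_iff: "vge k (r * Pf powi j) \<longleftrightarrow> vge (k - j) r"
proof
  assume "vge k (r * Pf powi j)"
  from vge_mult[OF this vge_Pk[of "- j"]] have "vge (k - j) (r * Pf powi j * Pf powi (- j))"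
    by simp
  also have "r * Pf powi j * Pf powi (- j) = r"
    by (simp add: power_int_minus)
  finally show "vge (k - j) r" .
next
  assume "vge (k - j) r"
  from vge_mult[OF this vge_Pk[of j]] show "vge k (r * Pf powi j)" by simp
qed

lemma vge_nat_iff: "vge (int n) (Fract a 1) \<longleftrightarrow> p ^ n dvd a"
proof
  assume "vge (int n) (Fract a 1)"
  then obtain c b where cb: "b \<noteq> 0" "\<not> p dvd b" "Fract a 1 = Fract c b * Pf powi (int n)"
    by (rule vgeE)
  then have "Fract a 1 = Fract (c * p ^ n) b" by (simp add: Pf_powi_nat Fract_pow1)
  then have "a * b = c * p ^ n" using cb by (simp add: eq_fract)
  then have "p ^ n dvd a * b" by simp
  then show "p ^ n dvd a" using coprime_pow_p[OF cb(2)] coprime_dvd_mult_left_iff by blast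
next
  assume "p ^ n dvd a"
  then obtain c where "a = p ^ n * c" by (elim dvdE)
  then have "Fract a 1 = Fract c 1 * Pf powi (int n)" by (simp add: Pf_powi_nat Fract_pow1 mult.commute)
  then show "vge (int n) (Fract a 1)" by (intro vgeI[of 1]) (simp_all add: p_not_unit)
qed

lemma vge_one_unit: "vge 1 (Fract u 1) \<longleftrightarrow> p dvd u"
  using vge_nat_iff[of 1 u] by simp

lemma vge_cancel_unit:
  assumes "\<not> p dvd u" "vge k (r * Fract u 1)" shows "vge k r"
proof -
  have "u \<noteq> 0" using assms(1) by auto
  have "vge 0 (Fract 1 u)" using assms(1) by (rule vge_frac)
  from vge_mult[OF assms(2) this] have "vge k (r * Fract u 1 * Fract 1 u)" by simp
  also have "r * Fract u 1 * Fract 1 u = r"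
  proof -
    have "Fract u 1 * Fract 1 u = 1" using \<open>u \<noteq> 0\<close> by (simp add: One_fract_def eq_fract)
    then show ?thesis by (simp add: mult.assoc)
  qed
  finally show ?thesis .
qed

lemma vge_sum: "finite S \<Longrightarrow> (\<And>i. i \<in> S \<Longrightarrow> vge k (f i)) \<Longrightarrow> vge k (\<Sum>i\<in>S. f i)"
  by (induction S rule: finite_induct) (simp_all add: vge_add)

lemma padic_small_iff: "padic_small p M r \<longleftrightarrow> vge (int M) r"
proof
  assume "padic_small p M r"
  then obtain a b where ab: "b \<noteq> 0" "coprime b p" "p ^ M dvd a" "r = Fract a b"
    unfolding padic_small_def by blast
  have "\<not> p dvd b" using ab(2) p_not_unit by (metis coprime_common_divisor dvd_refl)
  obtain c where "a = p ^ M * c" using ab(3) by (elim dvdE)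
  then have "r = Fract c b * Pf powi (int M)" using ab by (simp add: Pf_powi_nat Fract_pow1 mult.commute)
  then show "vge (int M) r" using \<open>\<not> p dvd b\<close> by (rule vgeI[rotated])
next
  assume "vge (int M) r"
  then obtain a b where ab: "b \<noteq> 0" "\<not> p dvd b" "r = Fract a b * Pf powi (int M)" by (rule vgeE)
  have "r = Fract (a * p ^ M) b" using ab by (simp add: Pf_powi_nat Fract_pow1)
  moreover have "coprime b p" using prime_elem_imp_coprime[OF prime_p ab(2)] by (simp add: coprime_commute)
  ultimately show "padic_small p M r" unfolding padic_small_def
    using ab(1) by (intro exI[of _ "a * p ^ M"] exI[of _ b]) simp
qed

definition res :: "bit poly fract \<Rightarrow> bit poly" where
  "res r = (SOME u. u \<in> Dig \<and> vge 1 (r + Fract u 1))"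

lemma res_ex: "vge 0 r \<Longrightarrow> \<exists>u. u \<in> Dig \<and> vge 1 (r + Fract u 1)"
proof -
  assume "vge 0 r"
  then obtain a b where ab: "b \<noteq> 0" "\<not> p dvd b" "r = Fract a b * Pf powi 0" by (rule vgeE)
  have "coprime b p" using prime_elem_imp_coprime[OF prime_p ab(2)] by (simp add: coprime_commute)
  then obtain S T where ST: "S * b + T * p = 1" using bezout_bp by blast
  define u where "u = (a * S) mod p"
  have "p dvd (a * S + u)" using mod_eq_iff_dvd[of "a * S" u] by (simp add: u_def)
  then obtain m where m: "a * S + u = p * m" by (elim dvdE)
  have ST': "S * b + 1 = T * p" using ST by (metis bp_add_self2 add.commute)
  have "a + u * b = a * (S * b + 1) + (a * S + u) * b" by (simp add: algebra_simps)
  also have "\<dots> = a * (T * p) + (p * m) * b" by (simp only: m ST')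
  also have "\<dots> = p * (a * T + m * b)" by (simp add: algebra_simps)
  finally have "a + u * b = p * (a * T + m * b)" .
  then have "r + Fract u 1 = Fract (a * T + m * b) b * Pf powi 1"
    using ab by (simp add: algebra_simps)
  then have "vge 1 (r + Fract u 1)" using ab(2) by (rule vgeI[rotated])
  then show ?thesis by (intro exI[of _ u]) (simp add: u_def)
qed

lemma res_prop: "vge 0 r \<Longrightarrow> res r \<in> Dig \<and> vge 1 (r + Fract (res r) 1)"
  unfolding res_def by (rule someI_ex, erule res_ex)

lemma res_unique:
  assumes "u \<in> Dig" "v \<in> Dig" "vge 1 (r + Fract u 1)" "vge 1 (r + Fract v 1)"
  shows "u = v"
proof -
  have "vge 1 ((r + Fract u 1) + (r + Fract v 1))" using assms(3,4) by (rule vge_add)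
  then have "vge 1 (Fract (u + v) 1)" by (simp add: algebra_simps)
  then have "p dvd (u + v)" by (simp add: vge_one_unit)
  then show ?thesis using Dig_eq assms by blast
qed

lemma res_eqI: "u \<in> Dig \<Longrightarrow> vge 0 r \<Longrightarrow> vge 1 (r + Fract u 1) \<Longrightarrow> res r = u"
  using res_prop res_unique by blast

lemma rep_ex: "\<exists>N n. vge 0 (r + Fract N (p ^ n))"
proof -
  obtain a b where ab: "r = Fract a b" "b \<noteq> 0" by (cases r)
  obtain b1 where b1: "b = p ^ multiplicity p b * b1" "\<not> p dvd b1"
    by (rule multiplicity_decompose'[OF ab(2) p_not_unit])
  define m where "m = multiplicity p b"
  have "coprime b1 (p ^ m)" using coprime_pow_p[OF b1(2)] by (simp add: coprime_commute)
  then obtain S T where ST: "S * b1 + T * p ^ m = 1" using bezout_bp by blast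
  have b1nz: "b1 \<noteq> 0" using b1 by auto
  have "r + Fract (a * S) (p ^ m) = Fract (a * T) b1"
  proof -
    have "Fract (a * S) (p ^ m) + Fract (a * T) b1 = Fract (a * (S * b1 + T * p ^ m)) (p ^ m * b1)"
      using b1nz by (simp add: algebra_simps)
    also have "\<dots> = Fract a (p ^ m * b1)" using ST by simp
    also have "p ^ m * b1 = b" using b1(1) m_def by simp
    finally have "Fract a b = Fract (a * S) (p ^ m) + Fract (a * T) b1" by simp
    then show ?thesis using ab(1) by simp
  qed
  moreover have "vge 0 (Fract (a * T) b1)" using b1(2) by (rule vge_frac)
  ultimately show ?thesis by metis
qed

definition lamK :: "bit poly fract \<Rightarrow> bool" where
  "lamK r = (\<exists>N n. vge 0 (r + Fract N (p ^ n)) \<and> Lam N n)"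

lemma Fract_lift: "Fract N (p ^ n) = Fract (N * p ^ m) (p ^ (n + m))"
  by (simp add: eq_fract power_add algebra_simps)

lemma Lam_welldef:
  assumes "vge 0 (r + Fract N (p ^ n))" "vge 0 (r + Fract M (p ^ m))"
  shows "Lam N n = Lam M m"
proof -
  have "vge 0 ((r + Fract N (p ^ n)) + (r + Fract M (p ^ m)))" using assms by (rule vge_add)
  then have "vge 0 (Fract N (p ^ n) + Fract M (p ^ m))" by (simp add: algebra_simps)
  also have "Fract N (p ^ n) + Fract M (p ^ m) = Fract (N * p ^ m + M * p ^ n) 1 * Pf powi (- int (n + m))"
  proof -
    have "Fract N (p ^ n) + Fract M (p ^ m) = Fract (N * p ^ m + M * p ^ n) (p ^ (n + m))"
      by (simp add: power_add algebra_simps)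
    also have "\<dots> = Fract (N * p ^ m + M * p ^ n) 1 * Fract 1 (p ^ (n + m))" by simp
    also have "Fract 1 (p ^ (n + m)) = Pf powi (- int (n + m))" by (rule Pf_powi_neg_nat[symmetric])
    finally show ?thesis .
  qed
  finally have "vge 0 (Fract (N * p ^ m + M * p ^ n) 1 * Pf powi (- int (n + m)))" .
  then have "vge (0 - (- int (n + m))) (Fract (N * p ^ m + M * p ^ n) 1)"
    by (rule vge_shift_iff[THEN iffD1])
  then have "vge (int (n + m)) (Fract (N * p ^ m + M * p ^ n) 1)"
    by (simp only: diff_0 minus_minus)
  then have "p ^ (n + m) dvd (N * p ^ m + M * p ^ n)" by (simp only: vge_nat_iff)
  then have "Lam (N * p ^ m) (n + m) = Lam (M * p ^ n) (n + m)" by (rule Lam_mod)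
  moreover have "Lam (N * p ^ m) (n + m) = Lam N n" by (rule Lam_shift_pow)
  moreover have "Lam (M * p ^ n) (n + m) = Lam M m" using Lam_shift_pow[of M n m] by (simp add: add.commute)
  ultimately show ?thesis by simp
qed

lemma lamK_rep: "vge 0 (r + Fract N (p ^ n)) \<Longrightarrow> lamK r = Lam N n"
  unfolding lamK_def using Lam_welldef by blast

lemma lamK_add: "lamK (r + s) = (lamK r \<noteq> lamK s)"
proof -
  obtain N n where N: "vge 0 (r + Fract N (p ^ n))" using rep_ex by blast
  obtain M m where M: "vge 0 (s + Fract M (p ^ m))" using rep_ex by blast
  have "vge 0 ((r + Fract N (p ^ n)) + (s + Fract M (p ^ m)))" using N M by (rule vge_add)
  moreover have "(r + Fract N (p ^ n)) + (s + Fract M (p ^ m)) =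
      (r + s) + Fract (N * p ^ m + M * p ^ n) (p ^ (n + m))"
  proof -
    have "Fract N (p ^ n) + Fract M (p ^ m) = Fract (N * p ^ m + M * p ^ n) (p ^ (n + m))"
      by (simp add: power_add algebra_simps)
    then show ?thesis by (simp add: algebra_simps)
  qed
  ultimately have "lamK (r + s) = Lam (N * p ^ m + M * p ^ n) (n + m)"
    by (intro lamK_rep) simp
  also have "\<dots> = (Lam (N * p ^ m) (n + m) \<noteq> Lam (M * p ^ n) (n + m))" by (rule Lam_add)
  also have "Lam (N * p ^ m) (n + m) = Lam N n" by (rule Lam_shift_pow)
  also have "Lam (M * p ^ n) (n + m) = Lam M m" using Lam_shift_pow[of M n m] by (simp add: add.commute)
  finally show ?thesis using lamK_rep[OF N] lamK_rep[OF M] by simp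
qed

lemma lamK_O: "vge 0 r \<Longrightarrow> lamK r = False"
  using lamK_rep[of r 0 0] by (simp add: fract_collapse)

lemma lamK_sq: "lamK (r^2) = lamK r"
proof -
  obtain N n where N: "vge 0 (r + Fract N (p ^ n))" using rep_ex by blast
  have "vge 0 ((r + Fract N (p ^ n)) * (r + Fract N (p ^ n)))" using vge_mult[OF N N] by simp
  also have "(r + Fract N (p ^ n)) * (r + Fract N (p ^ n)) = r^2 + Fract (N^2) (p ^ (2 * n))"
  proof -
    have "Fract N (p ^ n) ^ 2 = Fract (N^2) (p ^ (2 * n))"
      by (simp add: Fract_pow power_mult[symmetric] mult.commute)
    then show ?thesis using bf_sq[of r "Fract N (p ^ n)"] by (simp add: power2_eq_square[symmetric])
  qed
  finally have "lamK (r^2) = Lam (N^2) (2 * n)" by (rule lamK_rep)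
  then show ?thesis using lamK_rep[OF N] Lam_sq by simp
qed

lemma lamK_tsq: "lamK (Fract tpoly 1 * r^2) = False"
proof -
  obtain N n where N: "vge 0 (r + Fract N (p ^ n))" using rep_ex by blast
  have "vge 0 (Fract tpoly 1 * ((r + Fract N (p ^ n)) * (r + Fract N (p ^ n))))"
    using vge_mult[OF vge_poly[of tpoly] vge_mult[OF N N]] by simp
  also have "Fract tpoly 1 * ((r + Fract N (p ^ n)) * (r + Fract N (p ^ n))) =
      Fract tpoly 1 * r^2 + Fract (tpoly * N^2) (p ^ (2 * n))"
  proof -
    have "Fract N (p ^ n) ^ 2 = Fract (N^2) (p ^ (2 * n))"
      by (simp add: Fract_pow power_mult[symmetric] mult.commute)
    then have "(r + Fract N (p ^ n)) * (r + Fract N (p ^ n)) = r^2 + Fract (N^2) (p ^ (2 * n))"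
      using bf_sq[of r "Fract N (p ^ n)"] by (simp add: power2_eq_square[symmetric])
    then show ?thesis by (simp add: distrib_left)
  qed
  finally have "lamK (Fract tpoly 1 * r^2) = Lam (tpoly * N^2) (2 * n)" by (rule lamK_rep)
  then show ?thesis using Lam_tsq by simp
qed

lemma lamK_frac: "lamK (Fract N (p ^ n)) = Lam N n"
  by (rule lamK_rep) simp

end


context pl
begin

lemma Kom_digit: "a \<in> Kom p \<Longrightarrow> a i \<in> Dig"
  unfolding Kom_def Dig_def by (metis (mono_tags, lifting) mem_Collect_eq)

lemma Kom_low: "a \<in> Kom p \<Longrightarrow> \<exists>N. \<forall>i<N. a i = 0"
  unfolding Kom_def by blast

lemma KomI: "(\<And>i. a i \<in> Dig) \<Longrightarrow> (\<forall>i<N. a i = 0) \<Longrightarrow> a \<in> Kom p"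
  unfolding Kom_def Dig_def by auto

lemma Kom_add: "a \<in> Kom p \<Longrightarrow> b \<in> Kom p \<Longrightarrow> (\<lambda>i. a i + b i) \<in> Kom p"
proof -
  assume a: "a \<in> Kom p" and b: "b \<in> Kom p"
  obtain N1 where N1: "\<forall>i<N1. a i = 0" using Kom_low[OF a] by blast
  obtain N2 where N2: "\<forall>i<N2. b i = 0" using Kom_low[OF b] by blast
  show ?thesis
    by (rule KomI[of _ "min N1 N2"]) (simp_all add: Kom_digit[OF a] Kom_digit[OF b] N1 N2)
qed

lemma Kom_zero [simp]: "(\<lambda>_. 0) \<in> Kom p"
  by (rule KomI[of _ 0]) simp_all

lemma below_le: "\<forall>i<N. a i = 0 \<Longrightarrow> a x \<noteq> 0 \<Longrightarrow> N \<le> (x::'a::linorder)"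
  by (metis not_le)

lemma finite_supp_below:
  assumes "\<forall>i<N. a i = 0" shows "finite {i. i < (n::int) \<and> a i \<noteq> 0}"
proof -
  have "{i. i < n \<and> a i \<noteq> 0} \<subseteq> {N..<n}"
  proof
    fix x assume "x \<in> {i. i < n \<and> a i \<noteq> 0}"
    then have "x < n" "a x \<noteq> 0" by auto
    then have "N \<le> x" using assms by (metis not_le)
    then show "x \<in> {N..<n}" using \<open>x < n\<close> by simp
  qed
  then show ?thesis by (rule finite_subset) simp
qed

lemma psum_interval:
  assumes "\<forall>i<N. a i = 0"
  shows "psum p a n = (\<Sum>i\<in>{N..<n}. Fract (a i) 1 * Pf powi i)"
  unfolding psum_def
proof (rule sum.mono_neutral_left)
  show "finite {N..<n}" by simp
  show "{i. i < n \<and> a i \<noteq> 0} \<subseteq> {N..<n}"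
  proof
    fix x assume "x \<in> {i. i < n \<and> a i \<noteq> 0}"
    then have "x < n" "a x \<noteq> 0" by auto
    then have "N \<le> x" using assms by (metis not_le)
    then show "x \<in> {N..<n}" using \<open>x < n\<close> by simp
  qed
  show "\<forall>i\<in>{N..<n} - {i. i < n \<and> a i \<noteq> 0}. Fract (a i) 1 * Pf powi i = 0"
    by (auto simp: fract_collapse)
qed

lemma psum_low:
  assumes "\<forall>i<N. a i = 0" "n \<le> N" shows "psum p a n = 0"
proof -
  have "{i. i < n \<and> a i \<noteq> 0} = {}" using assms by auto
  then show ?thesis unfolding psum_def by (simp only: sum.empty)
qed

lemma psum_Suc:
  assumes "a \<in> Kom p"
  shows "psum p a (n + 1) = psum p a n + Fract (a n) 1 * Pf powi n"
proof -
  obtain N where N: "\<forall>i<N. a i = 0" using Kom_low[OF assms] by blast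
  have fin: "finite {i. i < n \<and> a i \<noteq> 0}" using N by (rule finite_supp_below)
  show ?thesis
  proof (cases "a n = 0")
    case True
    have "{i. i < n + 1 \<and> a i \<noteq> 0} = {i. i < n \<and> a i \<noteq> 0}"
      using True by (auto, metis le_less zless_add1_eq)
    then show ?thesis using True unfolding psum_def by (simp add: fract_collapse)
  next
    case False
    have e: "{i. i < n + 1 \<and> a i \<noteq> 0} = insert n {i. i < n \<and> a i \<noteq> 0}"
      using False by auto
    have "n \<notin> {i. i < n \<and> a i \<noteq> 0}" by simp
    then show ?thesis unfolding psum_def e using fin by (simp add: add.commute)
  qed
qed

lemma psum_add:
  assumes "a \<in> Kom p" "b \<in> Kom p"
  shows "psum p (\<lambda>i. a i + b i) n = psum p a n + psum p b n"
proof -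
  obtain N1 where N1: "\<forall>i<N1. a i = 0" using Kom_low[OF assms(1)] by blast
  obtain N2 where N2: "\<forall>i<N2. b i = 0" using Kom_low[OF assms(2)] by blast
  define N where "N = min N1 N2"
  have a: "\<forall>i<N. a i = 0" and b: "\<forall>i<N. b i = 0" and ab: "\<forall>i<N. a i + b i = 0"
    using N1 N2 by (auto simp: N_def)
  show ?thesis
    unfolding psum_interval[OF a] psum_interval[OF b] psum_interval[OF ab]
    by (simp add: sum.distrib[symmetric] flip: distrib_right)
qed

lemma vge_term: "vge k (Fract u 1 * Pf powi k)"
  using vge_mult[OF vge_poly[of u] vge_Pk[of k]] by simp

lemma psum_diff_vge:
  assumes "a \<in> Kom p" "n \<le> m" shows "vge n (psum p a m + psum p a n)"
  using assms(2)
proof (induction m rule: int_ge_induct)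
  case base then show ?case by simp
next
  case (step m)
  have eq: "psum p a (m + 1) + psum p a n = (psum p a m + psum p a n) + Fract (a m) 1 * Pf powi m"
    by (subst psum_Suc[OF assms(1)]) (simp add: ac_simps)
  have "vge n (Fract (a m) 1 * Pf powi m)" using vge_term step(1) by (rule vge_mono)
  then show ?case by (subst eq) (rule vge_add[OF step(2)])
qed

lemma psum_vge_low:
  assumes "a \<in> Kom p" "\<forall>i<N. a i = 0" shows "vge N (psum p a n)"
proof (cases "n \<le> N")
  case True then show ?thesis using psum_low[OF assms(2) True] by simp
next
  case False
  then have "vge N (psum p a n + psum p a N)" using psum_diff_vge[OF assms(1)] by simp
  then show ?thesis using psum_low[OF assms(2)] by simp
qed

lemma psum_lead:
  assumes a: "a \<in> Kom p" and k: "a k \<noteq> 0" "\<forall>j<k. a j = 0" and n: "k < n"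
  shows "\<exists>u. \<not> p dvd u \<and> psum p a n = Fract u 1 * Pf powi k"
proof -
  have "k + 1 \<le> n" using n by simp
  then show ?thesis
  proof (induction n rule: int_ge_induct)
    case base
    have "psum p a (k + 1) = Fract (a k) 1 * Pf powi k"
      using psum_Suc[OF a, of k] psum_low[OF k(2), of k] by simp
    moreover have "\<not> p dvd a k" using Dig_dvd[OF Kom_digit[OF a]] k(1) by blast
    ultimately show ?case by blast
  next
    case (step m)
    then obtain u where u: "\<not> p dvd u" "psum p a m = Fract u 1 * Pf powi k" by blast
    define j where "j = nat (m - k)"
    have j: "j \<ge> 1" "m = k + int j" using step(1) by (auto simp: j_def)
    have pm: "Pf powi m = Fract (p ^ j) 1 * Pf powi k"
      using Pf_powi_add[of k "int j"] j(2) by (simp add: Pf_powi_nat Fract_pow1 mult.commute)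
    have "psum p a (m + 1) = psum p a m + Fract (a m) 1 * Pf powi m" by (rule psum_Suc[OF a])
    also have "\<dots> = Fract u 1 * Pf powi k + (Fract (a m) 1 * Fract (p ^ j) 1) * Pf powi k"
      using u(2) pm by (simp only: mult.assoc)
    also have "\<dots> = Fract (u + a m * p ^ j) 1 * Pf powi k"
      by (simp only: distrib_right[symmetric] Fract_add1 Fract_mult1)
    finally have "psum p a (m + 1) = Fract (u + a m * p ^ j) 1 * Pf powi k" .
    moreover have "\<not> p dvd (u + a m * p ^ j)"
    proof
      assume "p dvd (u + a m * p ^ j)"
      moreover have "p dvd a m * p ^ j" using j(1) by (simp add: dvd_power)
      ultimately have "p dvd (u + a m * p ^ j) + a m * p ^ j" by (rule dvd_add)
      then show False using u(1) by simp
    qed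
    ultimately show ?case by blast
  qed
qed

lemma Kom_least:
  assumes a: "a \<in> Kom p" and nz: "a \<noteq> (\<lambda>_. 0)"
  shows "\<exists>k. a k \<noteq> 0 \<and> (\<forall>j<k. a j = 0)"
proof -
  obtain N where N: "\<forall>i<N. a i = 0" using Kom_low[OF a] by blast
  obtain i where i: "a i \<noteq> 0" using nz by auto
  have "i \<ge> N" using N i by (meson not_less)
  define m where "m = (LEAST m::nat. a (N + int m) \<noteq> 0)"
  have ex: "a (N + int (nat (i - N))) \<noteq> 0" using i \<open>i \<ge> N\<close> by simp
  then have m1: "a (N + int m) \<noteq> 0" unfolding m_def by (rule LeastI)
  have m2: "a j = 0" if "j < N + int m" for j
  proof (cases "j < N")
    case True then show ?thesis using N by simp
  next
    case False
    then have "nat (j - N) < m" using that by simp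
    then have "\<not> a (N + int (nat (j - N))) \<noteq> 0" unfolding m_def by (rule not_less_Least)
    then show ?thesis using False by simp
  qed
  show ?thesis using m1 m2 by blast
qed

section \<open>Normal form and valuation\<close>

lemma NF:
  assumes "r \<noteq> 0"
  shows "\<exists>u v k. \<not> p dvd u \<and> \<not> p dvd v \<and> r = Fract u v * Pf powi k"
proof -
  obtain a b where ab: "r = Fract a b" "b \<noteq> 0" by (cases r)
  have "a \<noteq> 0" using ab assms by (auto simp: fract_collapse)
  obtain a1 where a1: "a = p ^ multiplicity p a * a1" "\<not> p dvd a1"
    by (rule multiplicity_decompose'[OF \<open>a \<noteq> 0\<close> p_not_unit])
  obtain b1 where b1: "b = p ^ multiplicity p b * b1" "\<not> p dvd b1"
    by (rule multiplicity_decompose'[OF ab(2) p_not_unit])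
  define j m where "j = multiplicity p a" and "m = multiplicity p b"
  have b1nz: "b1 \<noteq> 0" using b1 by auto
  have "Pf powi (int j - int m) = Fract (p ^ j) (p ^ m)"
    by (simp add: power_int_diff Fract_pow1)
  then have "Fract a1 b1 * Pf powi (int j - int m) = Fract a b"
    using a1(1) b1(1) unfolding j_def[symmetric] m_def[symmetric]
    by (simp add: algebra_simps)
  then show ?thesis using a1(2) b1(2) ab(1) by metis
qed

lemma vge_NF:
  assumes "\<not> p dvd u" "\<not> p dvd v"
  shows "vge j (Fract u v * Pf powi k) \<longleftrightarrow> j \<le> k"
proof
  assume h: "vge j (Fract u v * Pf powi k)"
  show "j \<le> k"
  proof (rule ccontr)
    assume "\<not> j \<le> k"
    then have jk: "1 \<le> j - k" by simp
    have "vge (j - k) (Fract u v)" using h vge_shift_iff by blast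
    then have "vge (j - k) (Fract u v * Fract v 1)" by (rule vge_mult_poly)
    moreover have "v \<noteq> 0" using assms(2) by auto
    then have "Fract u v * Fract v 1 = Fract u 1" by (simp add: eq_fract)
    ultimately have "vge 1 (Fract u 1)" using jk vge_mono by metis
    then show False using assms(1) by (simp add: vge_one_unit)
  qed
next
  assume "j \<le> k"
  moreover have "vge k (Fract u v * Pf powi k)" using vge_mult[OF vge_frac[OF assms(2)] vge_Pk[of k]] by simp
  ultimately show "vge j (Fract u v * Pf powi k)" using vge_mono by blast
qed

lemma vge_sq_O: "vge 0 (r^2) \<Longrightarrow> vge 0 r"
proof (cases "r = 0")
  case False
  assume h: "vge 0 (r^2)"
  obtain u v k where uvk: "\<not> p dvd u" "\<not> p dvd v" "r = Fract u v * Pf powi k" using NF[OF False] by blast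
  have "Pf powi (2 * k) = Pf powi k * Pf powi k" using Pf_powi_add[of k k] by (simp only: mult_2)
  have "r^2 = (Fract u v * Fract u v) * (Pf powi k * Pf powi k)"
    using uvk(3) by (simp only: power2_eq_square mult_ac)
  also have "\<dots> = Fract (u * u) (v * v) * Pf powi (2 * k)"
    using \<open>Pf powi (2 * k) = Pf powi k * Pf powi k\<close> by simp
  finally have "r^2 = Fract (u * u) (v * v) * Pf powi (2 * k)" .
  moreover have "\<not> p dvd u * u" "\<not> p dvd v * v" using uvk p_dvd_mult by blast+
  ultimately have "0 \<le> 2 * k" using h vge_NF by metis
  then show "vge 0 r" using vge_NF[OF uvk(1,2)] uvk(3) by simp
qed simp

lemma pderiv_tsq: "pderiv (a^2 + tpoly * b^2) = b^2"
  by (simp add: pderiv_add pderiv_mult)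

lemma t_not_sq: "\<not> vge 2 (r^2 + Fract tpoly 1)"
proof
  assume h: "vge 2 (r^2 + Fract tpoly 1)"
  then have "vge 0 (r^2 + Fract tpoly 1)" using vge_mono by fastforce
  then have "vge 0 ((r^2 + Fract tpoly 1) + Fract tpoly 1)" using vge_add vge_poly by blast
  then have "vge 0 (r^2)" by simp
  then have "vge 0 r" by (rule vge_sq_O)
  then obtain a b where ab: "b \<noteq> 0" "\<not> p dvd b" "r = Fract a b * Pf powi 0" by (rule vgeE)
  have "(r^2 + Fract tpoly 1) * Fract (b^2) 1 = Fract (a^2 + tpoly * b^2) 1"
    using ab by (simp add: Fract_pow algebra_simps eq_fract power2_eq_square)
  moreover have "vge 2 ((r^2 + Fract tpoly 1) * Fract (b^2) 1)" using h by (rule vge_mult_poly)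
  ultimately have "vge (int 2) (Fract (a^2 + tpoly * b^2) 1)" by simp
  then have "p ^ 2 dvd (a^2 + tpoly * b^2)" by (simp only: vge_nat_iff)
  then obtain G where G: "a^2 + tpoly * b^2 = p^2 * G" by (elim dvdE)
  have "b^2 = pderiv (p^2 * G)" using pderiv_tsq[of a b] G by simp
  also have "\<dots> = p^2 * pderiv G" by (simp add: pderiv_mult)
  finally have "p dvd b^2" by (simp add: power2_eq_square)
  then show False using ab(2) p_dvd_power by blast
qed

section \<open>Descent\<close>

definition isR :: "bit poly fract \<Rightarrow> bool" where
  "isR x \<longleftrightarrow> (\<exists>A m. x = Fract A (p ^ m))"

lemma isR_0 [simp]: "isR 0"
  unfolding isR_def by (rule exI[of _ 0], rule exI[of _ 0]) (simp add: fract_collapse)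

lemma isR_add: "isR x \<Longrightarrow> isR y \<Longrightarrow> isR (x + y)"
  unfolding isR_def
proof (elim exE)
  fix A m B n assume "x = Fract A (p ^ m)" "y = Fract B (p ^ n)"
  then have "x + y = Fract (A * p ^ n + B * p ^ m) (p ^ (m + n))" by (simp add: power_add algebra_simps)
  then show "\<exists>A m. x + y = Fract A (p ^ m)" by blast
qed

lemma Fract_add_same: "c \<noteq> 0 \<Longrightarrow> Fract a c + Fract b c = Fract (a + b) (c::bit poly)"
proof -
  assume "c \<noteq> 0"
  have "Fract a c + Fract b c = Fract (c * (a + b)) (c * c)" using \<open>c \<noteq> 0\<close> by (simp add: algebra_simps)
  also have "\<dots> = Fract (a + b) c" using \<open>c \<noteq> 0\<close> by (rule mult_fract_cancel)
  finally show ?thesis .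
qed

lemma descent_aux:
  "\<not> Lam N n \<Longrightarrow> \<exists>a b. isR a \<and> isR b \<and> vge 0 (Fract N (p ^ n) + a^2 + a + Fract tpoly 1 * b^2)"
proof (induction N n rule: Lam.induct)
  case (1 N)
  show ?case by (intro exI[of _ 0]) simp
next
  case (2 N)
  then have "N mod p \<in> W" by (simp add: lam1_def)
  then obtain v where v: "v \<in> Dig" "N mod p = Lmap v" by (auto simp: W_def)
  define C D where "C = cpart (v * p)" and "D = dpart (v * p)"
  have vp: "v * p = C^2 + tpoly * D^2" unfolding C_def D_def by (rule decomp)
  have "N mod p = (v + C) mod p" using v by (simp add: Lmap_def C_def)
  then have "p dvd N + (v + C)" by (simp add: mod_eq_iff_dvd)
  then obtain k where k: "N + (v + C) = p * k" by (elim dvdE)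
  have "(Fract C p)^2 + Fract tpoly 1 * (Fract D p)^2 = Fract (C^2) (p^2) + Fract (tpoly * D^2) (p^2)"
    by (simp add: Fract_pow)
  also have "\<dots> = Fract (C^2 + tpoly * D^2) (p^2)" by (rule Fract_add_same) simp
  also have "\<dots> = Fract v p" using vp by (simp add: eq_fract power2_eq_square algebra_simps)
  finally have e: "(Fract C p)^2 + Fract tpoly 1 * (Fract D p)^2 = Fract v p" .
  have "Fract N (p ^ Suc 0) + (Fract C p)^2 + Fract C p + Fract tpoly 1 * (Fract D p)^2
      = Fract N p + Fract v p + Fract C p" using e by (simp add: algebra_simps)
  also have "\<dots> = Fract (N + (v + C)) p" by (simp only: Fract_add_same[OF p_nz] add.assoc)
  also have "\<dots> = Fract k 1" using k by (simp add: eq_fract)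
  finally have "vge 0 (Fract N (p ^ Suc 0) + (Fract C p)^2 + Fract C p + Fract tpoly 1 * (Fract D p)^2)"
    by simp
  moreover have "isR (Fract C p)" "isR (Fract D p)" unfolding isR_def
    by (metis power_one_right)+
  ultimately show ?case by blast
next
  case (3 N n)
  show ?case
  proof (cases "even n")
    case True
    define m where "m = Suc (n div 2)"
    have nm: "Suc (Suc n) = 2 * m" using True by (simp add: m_def)
    have "\<not> Lam (cpart N) m" using 3(3) True by (simp add: m_def)
    then obtain a2 b2 where ab2: "isR a2" "isR b2"
        "vge 0 (Fract (cpart N) (p ^ m) + a2^2 + a2 + Fract tpoly 1 * b2^2)"
      using 3(1)[OF True] unfolding m_def by blast
    define a1 b1 where "a1 = Fract (cpart N) (p ^ m)" and "b1 = Fract (dpart N) (p ^ m)"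
    have e: "a1^2 + Fract tpoly 1 * b1^2 = Fract N (p ^ Suc (Suc n))"
    proof -
      have pm2: "(p ^ m)^2 = p ^ (2 * m)" by (simp add: power_mult[symmetric] mult.commute)
      have "a1^2 = Fract ((cpart N)^2) (p ^ (2 * m))" unfolding a1_def by (simp only: Fract_pow pm2)
      moreover have "Fract tpoly 1 * b1^2 = Fract (tpoly * (dpart N)^2) (p ^ (2 * m))"
        unfolding b1_def by (simp only: Fract_pow pm2 mult_fract mult_1)
      ultimately have "a1^2 + Fract tpoly 1 * b1^2 = Fract ((cpart N)^2 + tpoly * (dpart N)^2) (p ^ (2 * m))"
        by (simp only: Fract_add_same[OF power_not_zero[OF p_nz]])
      then show ?thesis using decomp[of N] nm by simp
    qed
    have "Fract N (p ^ Suc (Suc n)) + (a1 + a2)^2 + (a1 + a2) + Fract tpoly 1 * (b1 + b2)^2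
        = (Fract N (p ^ Suc (Suc n)) + (a1^2 + Fract tpoly 1 * b1^2)) + (a1 + a2^2 + a2 + Fract tpoly 1 * b2^2)"
      by (simp add: bf_sq algebra_simps)
    also have "\<dots> = Fract (cpart N) (p ^ m) + a2^2 + a2 + Fract tpoly 1 * b2^2"
      using e by (simp add: a1_def algebra_simps)
    finally have eq: "Fract N (p ^ Suc (Suc n)) + (a1 + a2)^2 + (a1 + a2) + Fract tpoly 1 * (b1 + b2)^2
        = Fract (cpart N) (p ^ m) + a2^2 + a2 + Fract tpoly 1 * b2^2" .
    have vg: "vge 0 (Fract N (p ^ Suc (Suc n)) + (a1 + a2)^2 + (a1 + a2) + Fract tpoly 1 * (b1 + b2)^2)"
      by (subst eq) (rule ab2(3))
    have "isR a1" "isR b1" unfolding a1_def b1_def isR_def by blast+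
    then have "isR (a1 + a2)" "isR (b1 + b2)" using ab2(1,2) isR_add by blast+
    then show ?thesis using vg by blast
  next
    case False
    define m where "m = Suc (Suc (n div 2))"
    have nm: "Suc (Suc (Suc n)) = 2 * m" using False by (simp add: m_def)
    have "\<not> Lam (cpart (N * p)) m" using 3(3) False by (simp add: m_def)
    then obtain a2 b2 where ab2: "isR a2" "isR b2"
        "vge 0 (Fract (cpart (N * p)) (p ^ m) + a2^2 + a2 + Fract tpoly 1 * b2^2)"
      using 3(2)[OF False] unfolding m_def by blast
    define a1 b1 where "a1 = Fract (cpart (N * p)) (p ^ m)" and "b1 = Fract (dpart (N * p)) (p ^ m)"
    have e: "a1^2 + Fract tpoly 1 * b1^2 = Fract N (p ^ Suc (Suc n))"
    proof -
      have pm2: "(p ^ m)^2 = p ^ (2 * m)" by (simp add: power_mult[symmetric] mult.commute)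
      have "a1^2 = Fract ((cpart (N * p))^2) (p ^ (2 * m))" unfolding a1_def by (simp only: Fract_pow pm2)
      moreover have "Fract tpoly 1 * b1^2 = Fract (tpoly * (dpart (N * p))^2) (p ^ (2 * m))"
        unfolding b1_def by (simp only: Fract_pow pm2 mult_fract mult_1)
      ultimately have "a1^2 + Fract tpoly 1 * b1^2 = Fract ((cpart (N * p))^2 + tpoly * (dpart (N * p))^2) (p ^ (2 * m))"
        by (simp only: Fract_add_same[OF power_not_zero[OF p_nz]])
      also have "\<dots> = Fract (N * p) (p ^ Suc (Suc (Suc n)))" using decomp[of "N * p"] nm by simp
      also have "\<dots> = Fract N (p ^ Suc (Suc n))" by (simp add: eq_fract algebra_simps)
      finally show ?thesis .
    qed
    have "Fract N (p ^ Suc (Suc n)) + (a1 + a2)^2 + (a1 + a2) + Fract tpoly 1 * (b1 + b2)^2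
        = (Fract N (p ^ Suc (Suc n)) + (a1^2 + Fract tpoly 1 * b1^2)) + (a1 + a2^2 + a2 + Fract tpoly 1 * b2^2)"
      by (simp add: bf_sq algebra_simps)
    also have "\<dots> = Fract (cpart (N * p)) (p ^ m) + a2^2 + a2 + Fract tpoly 1 * b2^2"
      using e by (simp add: a1_def algebra_simps)
    finally have eq: "Fract N (p ^ Suc (Suc n)) + (a1 + a2)^2 + (a1 + a2) + Fract tpoly 1 * (b1 + b2)^2
        = Fract (cpart (N * p)) (p ^ m) + a2^2 + a2 + Fract tpoly 1 * b2^2" .
    have vg: "vge 0 (Fract N (p ^ Suc (Suc n)) + (a1 + a2)^2 + (a1 + a2) + Fract tpoly 1 * (b1 + b2)^2)"
      by (subst eq) (rule ab2(3))
    have "isR a1" "isR b1" unfolding a1_def b1_def isR_def by blast+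
    then have "isR (a1 + a2)" "isR (b1 + b2)" using ab2(1,2) isR_add by blast+
    then show ?thesis using vg by blast
  qed
qed

lemma descent:
  assumes "\<not> lamK r"
  shows "\<exists>a b. isR a \<and> isR b \<and> vge 0 (r + a^2 + a + Fract tpoly 1 * b^2)"
proof -
  obtain N n where N: "vge 0 (r + Fract N (p ^ n))" using rep_ex by blast
  then have "\<not> Lam N n" using assms lamK_rep by simp
  then obtain a b where ab: "isR a" "isR b" "vge 0 (Fract N (p ^ n) + a^2 + a + Fract tpoly 1 * b^2)"
    using descent_aux by blast
  have "vge 0 ((r + Fract N (p ^ n)) + (Fract N (p ^ n) + a^2 + a + Fract tpoly 1 * b^2))"
    using N ab(3) by (rule vge_add)
  then have "vge 0 (r + a^2 + a + Fract tpoly 1 * b^2)" by (simp add: algebra_simps)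
  then show ?thesis using ab by blast
qed

end


context pl
begin

lemma lamK_psum:
  assumes "y \<in> Kom p" "0 \<le> n" shows "lamK (psum p y n) = lamK (psum p y 0)"
proof -
  have v: "vge 0 (psum p y n + psum p y 0)" using psum_diff_vge[OF assms] .
  have "psum p y n = (psum p y n + psum p y 0) + psum p y 0" by simp
  then have "lamK (psum p y n) = (lamK (psum p y n + psum p y 0) \<noteq> lamK (psum p y 0))"
    by (metis lamK_add)
  then show ?thesis using lamK_O[OF v] by simp
qed

lemma inv_lead:
  assumes u: "\<not> p dvd u" and Q: "vge j Q"
  shows "vge (j - 2 * k) (Q / (Fract u 1 * Pf powi k)^2)"
proof -
  define D where "D = Fract u 1 * Pf powi k"
  have unz: "u \<noteq> 0" using u by auto
  have "D * (Fract 1 u * Pf powi (- k)) = (Fract u 1 * Fract 1 u) * (Pf powi k * Pf powi (- k))"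
    unfolding D_def by (simp only: mult_ac)
  also have "\<dots> = 1" using unz by (simp add: eq_fract One_fract_def power_int_minus)
  finally have inv: "inverse D = Fract 1 u * Pf powi (- k)" by (rule inverse_unique)
  have eq: "Q / D^2 = Q * (Fract 1 u * Pf powi (- k)) * (Fract 1 u * Pf powi (- k))"
    by (simp add: divide_inverse power2_eq_square inv mult.assoc)
  have "vge (0 + - k) (Fract 1 u * Pf powi (- k))" using vge_frac[OF u] vge_Pk by (rule vge_mult)
  then have i: "vge (- k) (Fract 1 u * Pf powi (- k))" by simp
  have "vge (j + - k + - k) (Q * (Fract 1 u * Pf powi (- k)) * (Fract 1 u * Pf powi (- k)))"
    using vge_mult[OF vge_mult[OF Q i] i] .
  then show ?thesis unfolding D_def[symmetric] eq by (simp add: algebra_simps)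
qed

lemma eventually_vge:
  assumes "\<forall>M. \<forall>\<^sub>F n in sequentially. padic_small p M (f n)"
  shows "\<exists>N0. \<forall>n\<ge>N0. vge (int M) (f n)"
  using assms[rule_format, of M] by (simp add: eventually_sequentially padic_small_iff)

lemma conic_trunc_eq:
  "conic_trunc p y x0 x1 x2 n =
     (psum p x0 (int n))^2 + psum p x0 (int n) * psum p x1 (int n)
     + psum p y (int n) * (psum p x1 (int n))^2 + Fract tpoly 1 * (psum p x2 (int n))^2"
  unfolding conic_trunc_def by simp

lemma nonexist:
  assumes y: "y \<in> Kom p" and cp: "conic_has_point p y"
  shows "\<not> lamK (psum p y 0)"
proof -
  obtain x0 x1 x2 where xs: "x0 \<in> Kom p" "x1 \<in> Kom p" "x2 \<in> Kom p"
    and nt: "\<not> (x0 = (\<lambda>_. 0) \<and> x1 = (\<lambda>_. 0) \<and> x2 = (\<lambda>_. 0))"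
    and H: "\<forall>M. \<forall>\<^sub>F n in sequentially. padic_small p M (conic_trunc p y x0 x1 x2 n)"
    using cp unfolding conic_has_point_def by blast
  define Q where "Q n = conic_trunc p y x0 x1 x2 n" for n
  have H': "\<exists>N0. \<forall>n\<ge>N0. vge (int M) (Q n)" for M
    unfolding Q_def by (rule eventually_vge[OF H])
  show ?thesis
  proof (cases "x1 = (\<lambda>_. 0)")
    case False
    obtain k where k: "x1 k \<noteq> 0" "\<forall>j<k. x1 j = 0" using Kom_least[OF xs(2) False] by blast
    obtain N0 where N0: "\<forall>n\<ge>N0. vge (int (nat (2 * k))) (Q n)" using H' by blast
    define n where "n = max N0 (nat (k + 1))"
    have kn: "k < int n" unfolding n_def by linarith
    obtain u where u: "\<not> p dvd u" "psum p x1 (int n) = Fract u 1 * Pf powi k"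
      using psum_lead[OF xs(2) k kn] by blast
    have "vge (int (nat (2 * k))) (Q n)" using N0 by (simp add: n_def)
    then have "vge (2 * k) (Q n)" using vge_mono by fastforce
    from inv_lead[OF u(1) this, where k=k] have v0: "vge 0 (Q n / (psum p x1 (int n))^2)"
      using u(2) by simp
    define D c e Y where "D = psum p x1 (int n)" and "c = psum p x0 (int n) / D"
      and "e = psum p x2 (int n) / D" and "Y = psum p y (int n)"
    have Dnz: "D \<noteq> 0" unfolding D_def u(2) using u(1) by (auto simp: Fract_eq0_iff)
    have "Q n / D^2 = c^2 + c + Y + Fract tpoly 1 * e^2"
      unfolding Q_def conic_trunc_eq c_def e_def Y_def D_def[symmetric] using Dnz
      by (simp add: field_simps power2_eq_square)
    then have eqY: "Y = Q n / D^2 + (c^2 + c) + Fract tpoly 1 * e^2"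
      by (simp add: algebra_simps)
    have lA: "lamK (Q n / D^2) = False" using lamK_O[OF v0[folded D_def]] .
    have s1: "lamK Y = (lamK (Q n / D^2 + (c^2 + c)) \<noteq> lamK (Fract tpoly 1 * e^2))"
      unfolding eqY by (rule lamK_add)
    have s2: "lamK (Q n / D^2 + (c^2 + c)) = (lamK (Q n / D^2) \<noteq> lamK (c^2 + c))" by (rule lamK_add)
    have s3: "lamK (c^2 + c) = (lamK (c^2) \<noteq> lamK c)" by (rule lamK_add)
    have "lamK Y = False" using s1 s2 s3 lA lamK_sq[of c] lamK_tsq[of e] by blast
    then have "\<not> lamK Y" by simp
    moreover have "lamK (psum p y (int n)) = lamK (psum p y 0)" by (rule lamK_psum[OF y]) simp
    ultimately show ?thesis by (simp add: Y_def)
  next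
    case x1: True
    have X1: "psum p x1 m = 0" for m unfolding x1 psum_def by simp
    show ?thesis
    proof (cases "x2 = (\<lambda>_. 0)")
      case False
      obtain k where k: "x2 k \<noteq> 0" "\<forall>j<k. x2 j = 0" using Kom_least[OF xs(3) False] by blast
      obtain N0 where N0: "\<forall>n\<ge>N0. vge (int (nat (2 * k + 2))) (Q n)" using H' by blast
      define n where "n = max N0 (nat (k + 1))"
      have kn: "k < int n" unfolding n_def by linarith
      obtain u where u: "\<not> p dvd u" "psum p x2 (int n) = Fract u 1 * Pf powi k"
        using psum_lead[OF xs(3) k kn] by blast
      have "vge (int (nat (2 * k + 2))) (Q n)" using N0 by (simp add: n_def)
      then have "vge (2 * k + 2) (Q n)" using vge_mono by fastforce
      from inv_lead[OF u(1) this, where k=k] have v2: "vge 2 (Q n / (psum p x2 (int n))^2)"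
        using u(2) by simp
      define E where "E = psum p x2 (int n)"
      have Enz: "E \<noteq> 0" unfolding E_def u(2) using u(1) by (auto simp: Fract_eq0_iff)
      have "Q n / E^2 = (psum p x0 (int n) / E)^2 + Fract tpoly 1"
        unfolding Q_def conic_trunc_eq X1 E_def[symmetric] using Enz
        by (simp add: field_simps power2_eq_square)
      then show ?thesis using v2 t_not_sq unfolding E_def by metis
    next
      case x2: True
      have X2: "psum p x2 m = 0" for m unfolding x2 psum_def by simp
      have nz0: "x0 \<noteq> (\<lambda>_. 0)" using nt x1 x2 by blast
      obtain k where k: "x0 k \<noteq> 0" "\<forall>j<k. x0 j = 0" using Kom_least[OF xs(1) nz0] by blast
      obtain N0 where N0: "\<forall>n\<ge>N0. vge (int (nat (2 * k + 1))) (Q n)" using H' by blast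
      define n where "n = max N0 (nat (k + 1))"
      have kn: "k < int n" unfolding n_def by linarith
      obtain u where u: "\<not> p dvd u" "psum p x0 (int n) = Fract u 1 * Pf powi k"
        using psum_lead[OF xs(1) k kn] by blast
      have "vge (int (nat (2 * k + 1))) (Q n)" using N0 by (simp add: n_def)
      then have v: "vge (2 * k + 1) (Q n)" using vge_mono by fastforce
      have "Pf powi (2 * k) = Pf powi k * Pf powi k" using Pf_powi_add[of k k] by (simp only: mult_2)
      then have "Q n = Fract (u * u) 1 * Pf powi (2 * k)"
        unfolding Q_def conic_trunc_eq X1 X2 u(2) by (simp add: power2_eq_square mult_ac)
      moreover have "\<not> p dvd u * u" using u(1) p_dvd_mult by blast
      ultimately have "vge (2 * k + 1) (Fract (u * u) 1 * Pf powi (2 * k))" using v by simp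
      then show ?thesis using vge_NF[OF \<open>\<not> p dvd u * u\<close>, of 1] by (simp add: p_not_unit)
    qed
  qed
qed

end


context pl
begin

definition pdig :: "bit poly \<Rightarrow> nat \<Rightarrow> bit poly" where
  "pdig A k = (A div p ^ k) mod p"

lemma pexp: "A = (\<Sum>k<K. pdig A k * p ^ k) + (A div p ^ K) * p ^ K"
proof (induction K)
  case 0 then show ?case by simp
next
  case (Suc K)
  have d: "A div p ^ Suc K = (A div p ^ K) div p"
    by (simp only: power_Suc2 poly_div_mult_right)
  define q where "q = A div p ^ K"
  have qe: "q = q div p * p + q mod p" by (simp add: div_mult_mod_eq)
  have "q * p ^ K = (q div p * p + q mod p) * p ^ K"
    by (rule arg_cong[where f="\<lambda>x. x * p ^ K"]) (rule qe)
  also have "\<dots> = q mod p * p ^ K + q div p * p ^ Suc K"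
  proof -
    have gen: "\<And>r s. (r * p + s) * p ^ K = s * p ^ K + r * p ^ Suc K" by (simp add: algebra_simps)
    show ?thesis by (rule gen)
  qed
  finally have "(A div p ^ K) * p ^ K = pdig A K * p ^ K + (A div p ^ Suc K) * p ^ Suc K"
    unfolding d pdig_def q_def .
  then show ?case using Suc by (simp add: add.assoc)
qed

lemma pdiv_big: "degree A < K \<Longrightarrow> A div p ^ K = 0"
proof -
  assume "degree A < K"
  moreover have "K \<le> degree (p ^ K)" using deg_p by (simp add: degree_power_eq)
  ultimately show ?thesis by (intro div_poly_less) simp
qed

lemma pexp_full: "degree A < K \<Longrightarrow> A = (\<Sum>k<K. pdig A k * p ^ k)"
  using pexp[of A K] pdiv_big by simp

definition dseq :: "bit poly \<Rightarrow> nat \<Rightarrow> int \<Rightarrow> bit poly" where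
  "dseq A m i = (if - int m \<le> i then pdig A (nat (i + int m)) else 0)"

lemma dseq_Kom: "dseq A m \<in> Kom p"
  by (rule KomI[of _ "- int m"]) (auto simp: dseq_def pdig_def)

lemma psum_dseq:
  "psum p (dseq A m) (int K - int m) = Fract (\<Sum>k<K. pdig A k * p ^ k) 1 * Pf powi (- int m)"
proof (induction K)
  case 0
  have "psum p (dseq A m) (- int m) = 0"
    by (rule psum_low[of "- int m"]) (auto simp: dseq_def)
  then show ?case by (simp add: fract_collapse)
next
  case (Suc K)
  have "psum p (dseq A m) (int (Suc K) - int m) = psum p (dseq A m) ((int K - int m) + 1)"
    by (rule arg_cong[where f="psum p (dseq A m)"]) simp
  also have "\<dots> = psum p (dseq A m) (int K - int m) + Fract (dseq A m (int K - int m)) 1 * Pf powi (int K - int m)"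
    by (rule psum_Suc[OF dseq_Kom])
  also have "dseq A m (int K - int m) = pdig A K" by (simp add: dseq_def)
  also have "Pf powi (int K - int m) = Fract (p ^ K) 1 * Pf powi (- int m)"
    using Pf_powi_add[of "int K" "- int m"] by (simp add: Pf_powi_nat Fract_pow1)
  also have "psum p (dseq A m) (int K - int m) = Fract (\<Sum>k<K. pdig A k * p ^ k) 1 * Pf powi (- int m)"
    by (rule Suc.IH)
  also have "Fract (\<Sum>k<K. pdig A k * p ^ k) 1 * Pf powi (- int m) +
      Fract (pdig A K) 1 * (Fract (p ^ K) 1 * Pf powi (- int m)) =
      (Fract (\<Sum>k<K. pdig A k * p ^ k) 1 + Fract (pdig A K) 1 * Fract (p ^ K) 1) * Pf powi (- int m)"
    by (simp only: distrib_right mult.assoc)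
  also have "Fract (\<Sum>k<K. pdig A k * p ^ k) 1 + Fract (pdig A K) 1 * Fract (p ^ K) 1 =
      Fract (\<Sum>k<Suc K. pdig A k * p ^ k) 1"
    by (simp only: Fract_mult1 Fract_add1 sum.lessThan_Suc)
  finally show ?case .
qed

lemma isR_digits:
  assumes "isR x" shows "\<exists>s\<in>Kom p. \<exists>n0. \<forall>n\<ge>n0. psum p s n = x"
proof -
  obtain A m where x: "x = Fract A (p ^ m)" using assms unfolding isR_def by blast
  have "\<forall>n\<ge>int (Suc (degree A)) - int m. psum p (dseq A m) n = x"
  proof (intro allI impI)
    fix n assume n: "int (Suc (degree A)) - int m \<le> n"
    define K where "K = nat (n + int m)"
    have K: "n = int K - int m" "degree A < K" using n by (auto simp: K_def)
    have "psum p (dseq A m) n = Fract (\<Sum>k<K. pdig A k * p ^ k) 1 * Pf powi (- int m)"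
      unfolding K(1) by (rule psum_dseq)
    also have "(\<Sum>k<K. pdig A k * p ^ k) = A" using pexp_full[OF K(2)] by simp
    also have "Fract A 1 * Pf powi (- int m) = x" by (simp add: x Pf_powi_neg_nat)
    finally show "psum p (dseq A m) n = x" .
  qed
  then show ?thesis using dseq_Kom by blast
qed

lemma delta_Kom: "u \<in> Dig \<Longrightarrow> (\<lambda>i::int. if i = 0 then u else 0) \<in> Kom p"
  by (rule KomI[of _ 0]) auto

lemma psum_delta0:
  assumes u: "u \<in> Dig" and n: "1 \<le> n"
  shows "psum p (\<lambda>i. if i = 0 then u else 0) n = Fract u 1"
  using n
proof (induction n rule: int_ge_induct)
  case base
  have "psum p (\<lambda>i. if i = 0 then u else 0) (0 + 1) =
      psum p (\<lambda>i. if i = 0 then u else 0) 0 + Fract u 1 * Pf powi 0"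
    using psum_Suc[OF delta_Kom[OF u], of 0] by simp
  moreover have "psum p (\<lambda>i. if i = 0 then u else 0) 0 = 0" by (rule psum_low[of 0]) auto
  ultimately show ?case by simp
next
  case (step n)
  then show ?case using psum_Suc[OF delta_Kom[OF u], of n] by (simp add: fract_collapse)
qed

section \<open>Surjectivity of t e^2 modulo p\<close>

lemma tsq_surj:
  assumes c: "c \<in> Dig" shows "\<exists>e\<in>Dig. p dvd (tpoly * e^2 + c)"
proof -
  define f where "f e = (tpoly * e^2) mod p" for e
  have sub: "f ` Dig \<subseteq> Dig" by (auto simp: f_def)
  have inj: "inj_on f Dig"
  proof (rule inj_onI)
    fix e e' assume e: "e \<in> Dig" "e' \<in> Dig" "f e = f e'"
    then have "p dvd (tpoly * e^2 + tpoly * e'^2)" by (simp add: f_def mod_eq_iff_dvd)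
    then have "p dvd tpoly * (e + e')^2" by (simp add: bp_sq distrib_left)
    then have "p dvd (e + e')^2" using p_dvd_mult p_not_dvd_t by blast
    then have "p dvd (e + e')" by (rule p_dvd_power)
    then show "e = e'" using Dig_eq e by blast
  qed
  have "f ` Dig = Dig" using endo_inj_surj[OF finite_Dig sub inj] .
  then obtain e where e: "e \<in> Dig" "f e = c" using c by (metis imageE)
  then have "(tpoly * e^2) mod p = c mod p" using c by (simp add: f_def)
  then show ?thesis using e(1) by (auto simp: mod_eq_iff_dvd)
qed

section \<open>Hensel lifting for z^2 + z = w\<close>

fun Zs :: "(nat \<Rightarrow> bit poly fract) \<Rightarrow> nat \<Rightarrow> bit poly" where
  "Zs V 0 = 0"
| "Zs V (Suc k) = Zs V k +
     (res (((Fract (Zs V k) 1)^2 + Fract (Zs V k) 1 + V (Suc k)) * Pf powi (- int k)) mod p) * p ^ k"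

definition zd :: "(nat \<Rightarrow> bit poly fract) \<Rightarrow> nat \<Rightarrow> bit poly" where
  "zd V k = res (((Fract (Zs V k) 1)^2 + Fract (Zs V k) 1 + V (Suc k)) * Pf powi (- int k)) mod p"

lemma Zs_Suc: "Zs V (Suc k) = Zs V k + zd V k * p ^ k"
  by (simp add: zd_def)

lemma hensel:
  assumes V1: "vge 1 (V 1)" and Vd: "\<And>k. 1 \<le> k \<Longrightarrow> vge (int k) (V (Suc k) + V k)"
  shows "1 \<le> k \<Longrightarrow> vge (int k) ((Fract (Zs V k) 1)^2 + Fract (Zs V k) 1 + V k)"
proof (induction k rule: nat_induct_at_least)
  case base
  have "vge 0 (V 1)" using V1 vge_mono by fastforce
  moreover have "vge 1 (V 1 + Fract 0 1)" using V1 by (simp add: fract_collapse)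
  ultimately have "res (V 1) = 0" by (intro res_eqI) simp_all
  then have "Zs V 1 = 0" by (simp add: fract_collapse)
  then show ?case using V1 by (simp add: fract_collapse)
next
  case (Suc k)
  define Z where "Z = Fract (Zs V k) 1"
  define E where "E = Z^2 + Z + V (Suc k)"
  have eqE: "E = (Z^2 + Z + V k) + (V (Suc k) + V k)" unfolding E_def by (simp add: algebra_simps)
  have vE: "vge (int k) E" unfolding eqE using Suc.IH[folded Z_def] Vd[OF Suc.hyps] by (rule vge_add)
  have "vge (int k + - int k) (E * Pf powi (- int k))" using vE vge_Pk by (rule vge_mult)
  then have "vge 0 (E * Pf powi (- int k))" by simp
  from res_prop[OF this] have d: "zd V k \<in> Dig" "vge 1 (E * Pf powi (- int k) + Fract (zd V k) 1)"
    unfolding zd_def E_def Z_def by simp_all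
  define T where "T = Fract (zd V k) 1 * Pf powi (int k)"
  have "vge (1 + int k) ((E * Pf powi (- int k) + Fract (zd V k) 1) * Pf powi (int k))"
    using d(2) vge_Pk by (rule vge_mult)
  moreover have "(E * Pf powi (- int k) + Fract (zd V k) 1) * Pf powi (int k) = E + T"
    unfolding T_def by (simp add: distrib_right mult.assoc power_int_minus)
  ultimately have v1: "vge (1 + int k) (E + T)" by simp
  have "vge (int k + int k) (T * T)" unfolding T_def using vge_term vge_term by (rule vge_mult)
  then have v2: "vge (1 + int k) (T * T)" using Suc.hyps vge_mono by fastforce
  have Z': "Fract (Zs V (Suc k)) 1 = Z + T"
    unfolding Zs_Suc Z_def T_def by (simp add: Pf_powi_nat Fract_pow1)
  have "(Fract (Zs V (Suc k)) 1)^2 + Fract (Zs V (Suc k)) 1 + V (Suc k) = (E + T) + T * T"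
    unfolding Z' E_def by (simp add: bf_sq power2_eq_square algebra_simps)
  moreover have "vge (1 + int k) ((E + T) + T * T)" using v1 v2 by (rule vge_add)
  ultimately show ?case by simp
qed

definition zseq :: "(nat \<Rightarrow> bit poly fract) \<Rightarrow> int \<Rightarrow> bit poly" where
  "zseq V i = (if 0 \<le> i then zd V (nat i) else 0)"

lemma zseq_Kom: "zseq V \<in> Kom p"
  by (rule KomI[of _ 0]) (auto simp: zseq_def zd_def)

lemma psum_zseq: "psum p (zseq V) (int n) = Fract (Zs V n) 1"
proof (induction n)
  case 0
  have "psum p (zseq V) 0 = 0" by (rule psum_low[of 0]) (auto simp: zseq_def)
  then show ?case by (simp add: fract_collapse)
next
  case (Suc n)
  have "psum p (zseq V) (int (Suc n)) = psum p (zseq V) (int n + 1)"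
    by (rule arg_cong[where f="psum p (zseq V)"]) simp
  also have "\<dots> = psum p (zseq V) (int n) + Fract (zseq V (int n)) 1 * Pf powi (int n)"
    by (rule psum_Suc[OF zseq_Kom])
  also have "\<dots> = Fract (Zs V n) 1 + Fract (zd V n) 1 * Fract (p ^ n) 1"
  proof -
    have zn: "zseq V (int n) = zd V n" by (simp add: zseq_def)
    show ?thesis by (simp only: Suc.IH zn Pf_powi_nat Fract_pow1)
  qed
  also have "\<dots> = Fract (Zs V (Suc n)) 1"
    by (simp only: Zs_Suc Fract_add1 Fract_mult1)
  finally show ?case .
qed

lemma one_Dig: "1 \<in> Dig" using deg_p by (simp add: Dig_iff)

lemma exist:
  assumes y: "y \<in> Kom p" and lam: "\<not> lamK (psum p y 0)"
  shows "conic_has_point p y"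
proof -
  define P0 where "P0 = psum p y 0"
  obtain a b where ab: "isR a" "isR b" "vge 0 (P0 + a^2 + a + Fract tpoly 1 * b^2)"
    using descent[OF lam] unfolding P0_def by blast
  define w where "w = P0 + a^2 + a + Fract tpoly 1 * b^2"
  have vw: "vge 0 (w + Fract (y 0) 1)" using ab(3) vge_poly by (simp add: w_def vge_add)
  define c where "c = res (w + Fract (y 0) 1)"
  have c: "c \<in> Dig" "vge 1 (w + Fract (y 0) 1 + Fract c 1)" using res_prop[OF vw] by (simp_all add: c_def)
  obtain e0 where e0: "e0 \<in> Dig" "p dvd (tpoly * e0^2 + c)" using tsq_surj[OF c(1)] by blast
  define V where "V n = w + (psum p y (int n) + P0) + Fract tpoly 1 * (Fract e0 1)^2" for n
  have V1: "vge 1 (V 1)"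
  proof -
    have ps1: "psum p y 1 = P0 + Fract (y 0) 1"
      using psum_Suc[OF y, of 0] by (simp add: P0_def)
    have "V 1 = (w + Fract (y 0) 1 + Fract c 1) + Fract (tpoly * e0^2 + c) 1"
      unfolding V_def using ps1 by (simp add: Fract_pow1 algebra_simps)
    moreover have "vge 1 (Fract (tpoly * e0^2 + c) 1)" using e0(2) by (simp add: vge_one_unit)
    ultimately show ?thesis using c(2) vge_add by simp
  qed
  have Vd: "vge (int k) (V (Suc k) + V k)" if "1 \<le> k" for k
  proof -
    have "V (Suc k) + V k = psum p y (int k + 1) + psum p y (int k)"
      unfolding V_def by (simp add: algebra_simps)
    also have "\<dots> = Fract (y (int k)) 1 * Pf powi (int k)" by (simp add: psum_Suc[OF y])
    finally have eq: "V (Suc k) + V k = Fract (y (int k)) 1 * Pf powi (int k)" .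
    show ?thesis unfolding eq by (rule vge_term)
  qed
  have hz: "vge (int k) ((Fract (Zs V k) 1)^2 + Fract (Zs V k) 1 + V k)" if "1 \<le> k" for k
    using hensel[OF V1 Vd that] .
  obtain sa na where sa: "sa \<in> Kom p" "\<forall>n\<ge>na. psum p sa n = a" using isR_digits[OF ab(1)] by blast
  obtain sb nb where sb: "sb \<in> Kom p" "\<forall>n\<ge>nb. psum p sb n = b" using isR_digits[OF ab(2)] by blast
  define d1 where "d1 = (\<lambda>i::int. if i = 0 then (1::bit poly) else 0)"
  define de where "de = (\<lambda>i::int. if i = 0 then e0 else 0)"
  define x0 where "x0 = (\<lambda>i. sa i + zseq V i)"
  define x2 where "x2 = (\<lambda>i. sb i + de i)"
  have K0: "x0 \<in> Kom p" unfolding x0_def using sa(1) zseq_Kom by (rule Kom_add)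
  have K1: "d1 \<in> Kom p" unfolding d1_def using one_Dig by (rule delta_Kom)
  have Kde: "de \<in> Kom p" unfolding de_def using e0(1) by (rule delta_Kom)
  have K2: "x2 \<in> Kom p" unfolding x2_def using sb(1) Kde by (rule Kom_add)
  have nt: "\<not> (x0 = (\<lambda>_. 0) \<and> d1 = (\<lambda>_. 0) \<and> x2 = (\<lambda>_. 0))"
  proof -
    have "d1 0 \<noteq> 0" by (simp add: d1_def)
    then show ?thesis by auto
  qed
  have ev: "\<forall>\<^sub>F n in sequentially. padic_small p M (conic_trunc p y x0 d1 x2 n)" for M
  proof -
    define N1 where "N1 = max (max (nat na) (nat nb)) (max 1 M)"
    have "padic_small p M (conic_trunc p y x0 d1 x2 n)" if n: "n \<ge> N1" for n
    proof -
      have n1: "1 \<le> n" "na \<le> int n" "nb \<le> int n" "M \<le> n" using n by (auto simp: N1_def)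
      have X0: "psum p x0 (int n) = a + Fract (Zs V n) 1"
        unfolding x0_def using psum_add[OF sa(1) zseq_Kom] sa(2) n1 psum_zseq by simp
      have X1: "psum p d1 (int n) = 1"
        unfolding d1_def using psum_delta0[OF one_Dig] n1 by (simp add: One_fract_def)
      have X2: "psum p x2 (int n) = b + Fract e0 1"
        unfolding x2_def using psum_add[OF sb(1) Kde] sb(2) n1 psum_delta0[OF e0(1)]
        by (simp add: de_def)
      have "conic_trunc p y x0 d1 x2 n =
          (Fract (Zs V n) 1)^2 + Fract (Zs V n) 1 + V n"
        unfolding conic_trunc_eq X0 X1 X2 V_def w_def P0_def
        by (simp add: bf_sq algebra_simps)
      moreover have "vge (int n) ((Fract (Zs V n) 1)^2 + Fract (Zs V n) 1 + V n)"
        using hz n1(1) by simp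
      ultimately have "vge (int M) (conic_trunc p y x0 d1 x2 n)"
        using n1(4) vge_mono by (metis of_nat_le_iff)
      then show ?thesis by (simp add: padic_small_iff)
    qed
    then show ?thesis unfolding eventually_sequentially by blast
  qed
  show ?thesis unfolding conic_has_point_def using K0 K1 K2 nt ev by blast
qed

theorem conic_iff:
  assumes "y \<in> Kom p"
  shows "conic_has_point p y \<longleftrightarrow> \<not> lamK (psum p y 0)"
  using exist[OF assms] nonexist[OF assms] by blast

end


context pl
begin

definition Ln :: "(int \<Rightarrow> bit poly) \<Rightarrow> bool" where
  "Ln y = lamK (psum p y 0)"

lemma psum_cong: "(\<forall>i<n. y i = z i) \<Longrightarrow> psum p y n = psum p z n"
proof -
  assume h: "\<forall>i<n. y i = z i"
  have "{i. i < n \<and> y i \<noteq> 0} = {i. i < n \<and> z i \<noteq> 0}" using h by auto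
  moreover have "\<And>i. i \<in> {i. i < n \<and> z i \<noteq> 0} \<Longrightarrow> Fract (y i) 1 * Pf powi i = Fract (z i) 1 * Pf powi i"
    using h by auto
  ultimately show ?thesis unfolding psum_def by (metis (no_types, lifting) sum.cong)
qed

lemma Ln_cong: "(\<forall>i<0. y i = z i) \<Longrightarrow> Ln y = Ln z"
  unfolding Ln_def using psum_cong by metis

lemma Kom_upd: "c \<in> Kom p \<Longrightarrow> u \<in> Dig \<Longrightarrow> c(k := u) \<in> Kom p"
proof -
  assume c: "c \<in> Kom p" and u: "u \<in> Dig"
  obtain N where N: "\<forall>i<N. c i = 0" using Kom_low[OF c] by blast
  show ?thesis by (rule KomI[of _ "min N k"]) (auto simp: Kom_digit[OF c] u N)
qed

lemma Ln_upd:
  assumes c: "c \<in> Kom p" and u: "u \<in> Dig"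
  shows "Ln (c(-1 := u)) = (Ln (c(-1 := 0)) \<noteq> lam1 u)"
proof -
  define dl where "dl = (\<lambda>i::int. if i = -1 then u else 0)"
  have Kd: "dl \<in> Kom p" unfolding dl_def by (rule KomI[of _ "-1"]) (auto simp: u)
  have K0: "c(-1 := 0) \<in> Kom p" using Kom_upd[OF c Dig_0] .
  have e: "c(-1 := u) = (\<lambda>i. (c(-1 := 0)) i + dl i)" by (auto simp: dl_def)
  have "psum p dl 0 = psum p dl (-1) + Fract (dl (-1)) 1 * Pf powi (-1)"
    using psum_Suc[OF Kd, of "-1"] by simp
  moreover have "psum p dl (-1) = 0" by (rule psum_low[of "-1"]) (auto simp: dl_def)
  moreover have "Pf powi (-1) = Fract 1 (p ^ 1)" using Pf_powi_neg_nat[of 1] by simp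
  ultimately have pd: "psum p dl 0 = Fract u (p ^ 1)" by (simp add: dl_def)
  have "Ln (c(-1 := u)) = lamK (psum p (c(-1 := 0)) 0 + psum p dl 0)"
    unfolding Ln_def e using psum_add[OF K0 Kd] by simp
  also have "\<dots> = (Ln (c(-1 := 0)) \<noteq> lam1 u)"
    unfolding lamK_add pd lamK_frac Ln_def by simp
  finally show ?thesis .
qed

definition Pat :: "int \<Rightarrow> int \<Rightarrow> (int \<Rightarrow> bit poly) set" where
  "Pat a b = {c. (\<forall>i. c i \<in> Dig) \<and> (\<forall>i. (i < a \<or> b \<le> i) \<longrightarrow> c i = 0)}"

lemma Pat_Kom: "c \<in> Pat a b \<Longrightarrow> c \<in> Kom p"
  unfolding Pat_def by (rule KomI[of _ a]) auto

lemma finite_Pat: "finite (Pat a b)"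
proof -
  define f where "f c = map (\<lambda>j. c (a + int j)) [0..<nat (b - a)]" for c :: "int \<Rightarrow> bit poly"
  have inj: "inj_on f (Pat a b)"
  proof (rule inj_onI)
    fix c c' assume c: "c \<in> Pat a b" and c': "c' \<in> Pat a b" and e: "f c = f c'"
    show "c = c'"
    proof
      fix i
      show "c i = c' i"
      proof (cases "a \<le> i \<and> i < b")
        case True
        define j where "j = nat (i - a)"
        have j: "j < nat (b - a)" "i = a + int j" using True by (auto simp: j_def)
        have "f c ! j = c i" "f c' ! j = c' i" using j by (simp_all add: f_def)
        then show ?thesis using e by simp
      next
        case False
        then show ?thesis using c c' unfolding Pat_def by auto
      qed
    qed
  qed
  have "f ` Pat a b \<subseteq> {xs. set xs \<subseteq> Dig \<and> length xs = nat (b - a)}"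
    by (auto simp: f_def Pat_def)
  moreover have "finite {xs. set xs \<subseteq> Dig \<and> length xs = nat (b - a)}"
    using finite_Dig by (rule finite_lists_length_eq)
  ultimately have "finite (f ` Pat a b)" by (rule finite_subset)
  then show ?thesis using inj by (rule finite_imageD)
qed

lemma val_om_eq: "y k \<noteq> 0 \<Longrightarrow> \<forall>j<k. y j = 0 \<Longrightarrow> val_om y = k"
  unfolding val_om_def
proof (rule the_equality)
  assume "y k \<noteq> 0" "\<forall>j<k. y j = 0"
  then show "y k \<noteq> 0 \<and> (\<forall>j<k. y j = 0)" by simp
  fix i assume "y i \<noteq> 0 \<and> (\<forall>j<i. y j = 0)"
  then show "i = k" using \<open>y k \<noteq> 0\<close> \<open>\<forall>j<k. y j = 0\<close> by (meson linorder_neqE)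
qed

lemma W_Dig_iff: "u \<in> Dig \<Longrightarrow> lam1 u \<longleftrightarrow> u \<notin> W"
  by (simp add: lam1_def)

lemma card_lam1: "card {u \<in> Dig. lam1 u = b} = 2 ^ (degree p - 1)"
proof (cases b)
  case False
  have "{u \<in> Dig. lam1 u = b} = W" using False W_sub by (auto simp: W_Dig_iff)
  then show ?thesis by (simp add: card_W)
next
  case True
  have "{u \<in> Dig. lam1 u = b} = Dig - W" using True by (auto simp: W_Dig_iff)
  then have "card {u \<in> Dig. lam1 u = b} = card Dig - card W"
    using card_Diff_subset[OF finite_W W_sub] by simp
  also have "\<dots> = 2 ^ degree p - 2 ^ (degree p - 1)" by (simp add: card_Dig card_W)
  also have "\<dots> = 2 ^ (degree p - 1)"
  proof -
    have "(2::nat) ^ degree p = 2 * 2 ^ (degree p - 1)" using deg_p by (cases "degree p") simp_all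
    then show ?thesis by simp
  qed
  finally show ?thesis .
qed

end

locale hl = pl +
  fixes \<mu> :: "(int \<Rightarrow> bit poly) measure"
  assumes haar: "haar_om p \<mu>"
begin

lemma space_mu: "space \<mu> = Kom p" using haar by (simp add: haar_om_def)

lemma ball_sets: "c \<in> Kom p \<Longrightarrow> ball_om p c n \<in> sets \<mu>"
  using haar unfolding haar_om_def by (auto intro: sigma_sets.Basic)

lemma ball_em: "c \<in> Kom p \<Longrightarrow> emeasure \<mu> (ball_om p c n) = ennreal (2 powr (- (real (degree p) * real_of_int n)))"
  using haar by (simp add: haar_om_def)

lemma ball_meas: "c \<in> Kom p \<Longrightarrow> measure \<mu> (ball_om p c n) = 2 powr (- (real (degree p) * real_of_int n))"
  using ball_em by (simp add: measure_def)

lemma fin_sub: "A \<subseteq> ball_om p c n \<Longrightarrow> c \<in> Kom p \<Longrightarrow> emeasure \<mu> A \<noteq> \<infinity>"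
proof -
  assume "A \<subseteq> ball_om p c n" "c \<in> Kom p"
  then have "emeasure \<mu> A \<le> emeasure \<mu> (ball_om p c n)" by (intro emeasure_mono ball_sets)
  then show ?thesis using ball_em[OF \<open>c \<in> Kom p\<close>, of n] by (auto simp: top_unique)
qed

lemma ball_fin: "c \<in> Kom p \<Longrightarrow> emeasure \<mu> (ball_om p c n) \<noteq> \<infinity>"
  by (simp add: ball_em)

lemma ball_upd_disj:
  "u \<noteq> v \<Longrightarrow> k < n \<Longrightarrow> ball_om p (c(k := u)) n \<inter> ball_om p (c(k := v)) n = {}"
  unfolding ball_om_def by auto

definition Eh :: "(int \<Rightarrow> bit poly) \<Rightarrow> (int \<Rightarrow> bit poly) set" where
  "Eh c = {y \<in> ball_om p c (-1). \<not> Ln y}"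

lemma Eh_decomp:
  assumes c: "c \<in> Kom p"
  shows "Eh c = (\<Union>u\<in>{u \<in> Dig. \<not> Ln (c(-1 := u))}. ball_om p (c(-1 := u)) 0)"
proof (intro equalityI subsetI)
  fix y assume y: "y \<in> Eh c"
  then have yK: "y \<in> Kom p" and yc: "\<forall>i<(-1). y i = c i" and nL: "\<not> Ln y"
    by (auto simp: Eh_def ball_om_def)
  define u where "u = y (-1)"
  have u: "u \<in> Dig" using Kom_digit[OF yK] by (simp add: u_def)
  have ag: "\<forall>i<0. y i = (c(-1 := u)) i"
  proof (intro allI impI)
    fix i :: int assume "i < 0"
    then have "i = -1 \<or> i < -1" by linarith
    then show "y i = (c(-1 := u)) i" using yc by (auto simp: u_def)
  qed
  have "\<not> Ln (c(-1 := u))" using nL Ln_cong[OF ag] by blast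
  moreover have "y \<in> ball_om p (c(-1 := u)) 0" using yK ag by (simp add: ball_om_def)
  ultimately show "y \<in> (\<Union>u\<in>{u \<in> Dig. \<not> Ln (c(-1 := u))}. ball_om p (c(-1 := u)) 0)"
    using u by blast
next
  fix y assume "y \<in> (\<Union>u\<in>{u \<in> Dig. \<not> Ln (c(-1 := u))}. ball_om p (c(-1 := u)) 0)"
  then obtain u where u: "u \<in> Dig" "\<not> Ln (c(-1 := u))" and y: "y \<in> ball_om p (c(-1 := u)) 0"
    by blast
  have yK: "y \<in> Kom p" and ag: "\<forall>i<0. y i = (c(-1 := u)) i" using y unfolding ball_om_def by blast+
  have "\<forall>i<(-1). y i = c i" using ag by auto
  moreover have "\<not> Ln y" using u(2) Ln_cong[OF ag] by blast
  ultimately show "y \<in> Eh c" using yK by (simp add: Eh_def ball_om_def)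
qed

lemma Eh_sets_meas:
  assumes c: "c \<in> Kom p"
  shows "Eh c \<in> sets \<mu>" "measure \<mu> (Eh c) = 2 ^ (degree p - 1)"
proof -
  define U where "U = {u \<in> Dig. \<not> Ln (c(-1 := u))}"
  have finU: "finite U" using finite_Dig by (simp add: U_def)
  have Ks: "\<And>u. u \<in> U \<Longrightarrow> c(-1 := u) \<in> Kom p" using Kom_upd[OF c] by (simp add: U_def)
  have sub: "(\<lambda>u. ball_om p (c(-1 := u)) 0) ` U \<subseteq> sets \<mu>" using Ks ball_sets by auto
  have dj: "disjoint_family_on (\<lambda>u. ball_om p (c(-1 := u)) 0) U"
    unfolding disjoint_family_on_def using ball_upd_disj by simp
  have E: "Eh c = (\<Union>u\<in>U. ball_om p (c(-1 := u)) 0)" unfolding U_def by (rule Eh_decomp[OF c])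
  show "Eh c \<in> sets \<mu>" unfolding E using finU sub by (intro sets.finite_UN) auto
  have "measure \<mu> (Eh c) = (\<Sum>u\<in>U. measure \<mu> (ball_om p (c(-1 := u)) 0))"
    unfolding E by (rule measure_finite_Union[OF finU sub dj]) (simp add: ball_em Ks)
  also have "\<dots> = (\<Sum>u\<in>U. 1)" using Ks by (simp add: ball_meas)
  also have "\<dots> = card U" by simp
  also have "U = {u \<in> Dig. lam1 u = Ln (c(-1 := 0))}"
  proof -
    have "(\<not> Ln (c(-1 := u))) = (lam1 u = Ln (c(-1 := 0)))" if "u \<in> Dig" for u
      using Ln_upd[OF c that] by blast
    then show ?thesis unfolding U_def by blast
  qed
  finally show "measure \<mu> (Eh c) = 2 ^ (degree p - 1)" by (simp add: card_lam1)
qed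

definition Bz :: "int \<Rightarrow> (int \<Rightarrow> bit poly) set" where
  "Bz k = ball_om p (\<lambda>_. 0) k"

lemma Bz_sets: "Bz k \<in> sets \<mu>" unfolding Bz_def by (rule ball_sets) simp

lemma Bz_meas: "measure \<mu> (Bz k) = 2 powr (- (real (degree p) * real_of_int k))"
  unfolding Bz_def by (rule ball_meas) simp

lemma Bz_fin: "emeasure \<mu> (Bz k) \<noteq> \<infinity>" unfolding Bz_def by (rule fin_sub) auto

lemma Bz_mono: "j \<le> k \<Longrightarrow> Bz k \<subseteq> Bz j"
  unfolding Bz_def ball_om_def by auto

lemma Bz_iff: "y \<in> Bz k \<longleftrightarrow> y \<in> Kom p \<and> (\<forall>i<k. y i = 0)"
  unfolding Bz_def ball_om_def by simp

definition Sn :: "nat \<Rightarrow> (int \<Rightarrow> bit poly) set" where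
  "Sn n = Bz (- int n) - Bz (1 - int n)"

definition An :: "nat \<Rightarrow> (int \<Rightarrow> bit poly) set" where
  "An n = {y \<in> Sn n. \<not> Ln y}"

lemma Sn_sets: "Sn n \<in> sets \<mu>" unfolding Sn_def using Bz_sets by auto

lemma Sn_meas: "measure \<mu> (Sn n) = 2 powr (real (degree p) * n) - 2 powr (real (degree p) * (real n - 1))"
proof -
  have "measure \<mu> (Sn n) = measure \<mu> (Bz (- int n)) - measure \<mu> (Bz (1 - int n))"
    unfolding Sn_def by (rule measure_Diff[OF Bz_fin Bz_sets Bz_sets Bz_mono]) simp
  then show ?thesis by (simp add: Bz_meas algebra_simps)
qed

lemma Sn_lead: "y \<in> Sn n \<Longrightarrow> y (- int n) \<noteq> 0 \<and> (\<forall>j < - int n. y j = 0) \<and> y \<in> Kom p"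
proof -
  assume "y \<in> Sn n"
  then have y: "y \<in> Kom p" "\<forall>i < - int n. y i = 0" "\<not> (\<forall>i < 1 - int n. y i = 0)"
    by (auto simp: Sn_def Bz_iff)
  then obtain i where i: "i < 1 - int n" "y i \<noteq> 0" by blast
  then have "i = - int n" using y(2) by (metis linorder_neqE_linordered_idom zless_add1_eq add.commute diff_add_cancel uminus_add_conv_diff)
  then show ?thesis using i y by simp
qed

lemma Ln_B0: "y \<in> Bz 0 \<Longrightarrow> Ln y = False"
proof -
  assume "y \<in> Bz 0"
  then have "\<forall>i<0. y i = 0" by (simp add: Bz_iff)
  then have "psum p y 0 = 0" by (rule psum_low) simp
  then show ?thesis by (simp add: Ln_def lamK_O)
qed

lemma A1_eq: "An 1 = Eh (\<lambda>_. 0) - Bz 0"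
proof -
  have "ball_om p (\<lambda>_. 0) (-1) = Bz (-1)" by (simp add: Bz_def)
  then show ?thesis unfolding An_def Sn_def Eh_def by auto
qed

lemma A1_sets_meas: "An 1 \<in> sets \<mu>" "measure \<mu> (An 1) = 2 ^ (degree p - 1) - 1"
proof -
  have sub: "Bz 0 \<subseteq> Eh (\<lambda>_. 0)"
    unfolding Eh_def using Ln_B0 Bz_mono[of "-1" 0] by (auto simp: Bz_def)
  have E: "Eh (\<lambda>_. 0) \<in> sets \<mu>" "measure \<mu> (Eh (\<lambda>_. 0)) = 2 ^ (degree p - 1)"
    using Eh_sets_meas[of "\<lambda>_. 0"] by simp_all
  show "An 1 \<in> sets \<mu>" unfolding A1_eq using E(1) Bz_sets by auto
  have fE: "emeasure \<mu> (Eh (\<lambda>_. 0)) \<noteq> \<infinity>" by (rule fin_sub[of _ "\<lambda>_. 0" "-1"]) (auto simp: Eh_def)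
  have "measure \<mu> (An 1) = measure \<mu> (Eh (\<lambda>_. 0)) - measure \<mu> (Bz 0)"
    unfolding A1_eq by (rule measure_Diff[OF fE E(1) Bz_sets sub])
  then show "measure \<mu> (An 1) = 2 ^ (degree p - 1) - 1" using E(2) by (simp add: Bz_meas)
qed

definition Tn :: "nat \<Rightarrow> (int \<Rightarrow> bit poly) set" where
  "Tn n = {c \<in> Pat (- int n) (-1). c (- int n) \<noteq> 0}"

lemma Tn_fin: "finite (Tn n)" unfolding Tn_def using finite_Pat by simp

lemma Tn_Kom: "c \<in> Tn n \<Longrightarrow> c \<in> Kom p" unfolding Tn_def using Pat_Kom by blast

lemma Sn_decomp:
  assumes n: "2 \<le> n"
  shows "Sn n = (\<Union>c\<in>Tn n. ball_om p c (-1))"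
proof (intro equalityI subsetI)
  fix y assume y: "y \<in> Sn n"
  note L = Sn_lead[OF y]
  define c where "c = (\<lambda>i. if - int n \<le> i \<and> i < -1 then y i else 0)"
  have "c \<in> Tn n" using L n Kom_digit[OF conjunct2[OF conjunct2[OF L]]]
    unfolding Tn_def Pat_def c_def by auto
  moreover have "y \<in> ball_om p c (-1)" using L unfolding ball_om_def c_def by auto
  ultimately show "y \<in> (\<Union>c\<in>Tn n. ball_om p c (-1))" by blast
next
  fix y assume "y \<in> (\<Union>c\<in>Tn n. ball_om p c (-1))"
  then obtain c where c: "c \<in> Tn n" "y \<in> ball_om p c (-1)" by blast
  have y: "y \<in> Kom p" "\<forall>i<(-1). y i = c i" using c(2) by (auto simp: ball_om_def)
  have cz: "\<forall>i < - int n. c i = 0" "c (- int n) \<noteq> 0" using c(1) by (auto simp: Tn_def Pat_def)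
  have "y \<in> Bz (- int n)" using y cz n by (auto simp: Bz_iff)
  moreover have "y (- int n) \<noteq> 0" using y cz n by auto
  then have "y \<notin> Bz (1 - int n)"
  proof -
    assume h: "y (- int n) \<noteq> 0"
    show ?thesis
    proof
      assume "y \<in> Bz (1 - int n)"
      then have "y (- int n) = 0" by (simp add: Bz_iff)
      then show False using h by simp
    qed
  qed
  ultimately show "y \<in> Sn n" by (simp add: Sn_def)
qed

lemma Tn_disj: "disjoint_family_on (\<lambda>c. ball_om p c (-1)) (Tn n)"
  unfolding disjoint_family_on_def
proof (intro ballI impI)
  fix c c' assume c: "c \<in> Tn n" "c' \<in> Tn n" "c \<noteq> c'"
  then obtain i where i: "c i \<noteq> c' i" by blast
  have "i < -1" using c(1,2) i unfolding Tn_def Pat_def by (metis (mono_tags, lifting) mem_Collect_eq not_less)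
  then show "ball_om p c (-1) \<inter> ball_om p c' (-1) = {}" using i unfolding ball_om_def by auto
qed

lemma An_sets_meas:
  assumes n: "2 \<le> n"
  shows "An n \<in> sets \<mu>" "measure \<mu> (An n) = measure \<mu> (Sn n) / 2"
proof -
  have A: "An n = (\<Union>c\<in>Tn n. Eh c)" unfolding An_def Sn_decomp[OF n] Eh_def by auto
  have s1: "(\<lambda>c. ball_om p c (-1)) ` Tn n \<subseteq> sets \<mu>" using Tn_Kom ball_sets by auto
  have s2: "Eh ` Tn n \<subseteq> sets \<mu>" using Tn_Kom Eh_sets_meas(1) by auto
  show "An n \<in> sets \<mu>" unfolding A using Tn_fin s2 by (intro sets.finite_UN) auto
  have d2: "disjoint_family_on Eh (Tn n)"
    using Tn_disj unfolding disjoint_family_on_def Eh_def by blast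
  have "measure \<mu> (An n) = (\<Sum>c\<in>Tn n. measure \<mu> (Eh c))"
    unfolding A
  proof (rule measure_finite_Union[OF Tn_fin s2 d2])
    fix c assume "c \<in> Tn n"
    then show "emeasure \<mu> (Eh c) \<noteq> \<infinity>" by (intro fin_sub[of _ c "-1"]) (auto simp: Eh_def Tn_Kom)
  qed
  also have "\<dots> = (\<Sum>c\<in>Tn n. 2 ^ (degree p - 1))" using Eh_sets_meas(2) Tn_Kom by simp
  finally have a: "measure \<mu> (An n) = card (Tn n) * 2 ^ (degree p - 1)" by simp
  have "measure \<mu> (Sn n) = (\<Sum>c\<in>Tn n. measure \<mu> (ball_om p c (-1)))"
    unfolding Sn_decomp[OF n] by (rule measure_finite_Union[OF Tn_fin s1 Tn_disj]) (use ball_fin Tn_Kom in blast)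
  also have "\<dots> = (\<Sum>c\<in>Tn n. 2 ^ degree p)" using Tn_Kom by (simp add: ball_meas powr_realpow)
  finally have b: "measure \<mu> (Sn n) = card (Tn n) * 2 ^ degree p" by simp
  have "(2::real) ^ degree p = 2 * 2 ^ (degree p - 1)" using deg_p by (cases "degree p") simp_all
  then show "measure \<mu> (An n) = measure \<mu> (Sn n) / 2" using a b by simp
qed

end


definition lc :: complex where "lc = complex_of_real (ln 2)"

lemma two_powr_c: "(2::complex) powr w = exp (w * lc)"
proof -
  have "ln (complex_of_real 2) = complex_of_real (ln 2)" by (rule Ln_of_real) simp
  then have "ln (2::complex) = lc" by (simp add: lc_def)
  then show ?thesis by (simp add: powr_def)
qed

lemma exp_lc: "exp lc = 2"
  by (simp add: lc_def exp_of_real)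

lemma exp_nat_lc: "exp (of_nat d * lc) = complex_of_real (2 ^ d)"
proof -
  have "exp (of_nat d * lc) = exp lc ^ d" by (rule exp_of_nat_mult)
  then show ?thesis by (simp add: exp_lc)
qed

lemma series_closed:
  fixes a b :: complex and t :: "nat \<Rightarrow> complex"
  assumes ab: "norm (a / b) < 1" "a \<noteq> 0" "b \<noteq> 0"
    and t0: "t 0 = 1" and t1: "t 1 = (a / 2 - 1) / b"
    and tn: "\<And>n. 2 \<le> n \<Longrightarrow> t n = (a ^ n - a ^ (n - 1)) / 2 / b ^ n"
  shows "t sums (1 + (a / 2 - 1) / b + (a - 1) / (2 * a) * (a / b)^2 / (1 - a / b))"
proof -
  define X where "X = a / b"
  define K where "K = (a - 1) / (2 * a)"
  have g: "(\<lambda>n. X ^ n) sums (1 / (1 - X))" using ab(1) unfolding X_def by (rule geometric_sums)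
  have "(\<lambda>n. K * X^2 * X ^ n) sums (K * X^2 * (1 / (1 - X)))" using g by (rule sums_mult)
  moreover have "t (Suc (Suc n)) = K * X^2 * X ^ n" for n
  proof -
    have "t (Suc (Suc n)) = (a ^ Suc (Suc n) - a ^ Suc n) / 2 / b ^ Suc (Suc n)" using tn[of "Suc (Suc n)"] by simp
    also have "\<dots> = K * X^2 * X ^ n" unfolding K_def X_def using ab(2,3)
      by (simp add: field_simps power2_eq_square)
    finally show ?thesis .
  qed
  ultimately have "(\<lambda>n. t (Suc (Suc n))) sums (K * X^2 * (1 / (1 - X)))" by simp
  then have "(\<lambda>n. t (Suc n)) sums (K * X^2 * (1 / (1 - X)) + t 1)"
    using sums_Suc_iff[where f="\<lambda>n. t (Suc n)"] by simp
  then have "t sums (K * X^2 * (1 / (1 - X)) + t 1 + t 0)"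
    using sums_Suc_iff[where f=t] by simp
  moreover have "K * X^2 * (1 / (1 - X)) + t 1 + t 0 = 1 + (a / 2 - 1) / b + (a - 1) / (2 * a) * (a / b)^2 / (1 - a / b)"
    unfolding K_def X_def t0 t1 by simp
  ultimately show ?thesis by simp
qed

lemma final_algebra:
  fixes a b :: complex
  assumes "a \<noteq> 0" "b \<noteq> 0" "b \<noteq> a"
  shows "1 + (a / 2 - 1) / b + (a - 1) / (2 * a) * (a / b)^2 / (1 - a / b)
      = 1 + 1/2 * (1 / (b / a) * (1 + (1 - inverse a) / (b / a - 1)) - 1 / (b / 2))"
    and "1 + (a / 2 - 1) / b + (a - 1) / (2 * a) * (a / b)^2 / (1 - a / b)
      = 1 + 1/2 * (1 / (b / a)) * (1 - 1 / (a / 2) + (1 - inverse a) / (b / a * (1 - a / b)))"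
proof -
  have bma: "b - a \<noteq> 0" using assms by simp
  have "1 - a / b = (b - a) / b" using assms by (simp add: field_simps)
  moreover have "b / a - 1 = (b - a) / a" using assms by (simp add: field_simps)
  ultimately show
    "1 + (a / 2 - 1) / b + (a - 1) / (2 * a) * (a / b)^2 / (1 - a / b)
      = 1 + 1/2 * (1 / (b / a) * (1 + (1 - inverse a) / (b / a - 1)) - 1 / (b / 2))"
    "1 + (a / 2 - 1) / b + (a - 1) / (2 * a) * (a / b)^2 / (1 - a / b)
      = 1 + 1/2 * (1 / (b / a)) * (1 - 1 / (a / 2) + (1 - inverse a) / (b / a * (1 - a / b)))"
    using assms bma by (simp_all add: field_simps power2_eq_square)
qed

context hl
begin

definition Aset :: "nat \<Rightarrow> (int \<Rightarrow> bit poly) set" where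
  "Aset n = (if n = 0 then Bz 0 else An n)"

lemma An_sub: "An n \<subseteq> Sn n" by (auto simp: An_def)

lemma Sn_Bz: "Sn n \<subseteq> Bz (- int n)" by (auto simp: Sn_def)

lemma Sn_B0: "1 \<le> n \<Longrightarrow> Sn n \<inter> Bz 0 = {}"
  unfolding Sn_def using Bz_mono[of "1 - int n" 0] by auto

lemma Sn_unique: "y \<in> Sn m \<Longrightarrow> y \<in> Sn n \<Longrightarrow> m = n"
proof -
  assume a: "y \<in> Sn m" "y \<in> Sn n"
  have "\<not> - int m < - int n" using Sn_lead[OF a(1)] Sn_lead[OF a(2)] by blast
  moreover have "\<not> - int n < - int m" using Sn_lead[OF a(1)] Sn_lead[OF a(2)] by blast
  ultimately show "m = n" by simp
qed

lemma Aset_sets: "Aset n \<in> sets \<mu>"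
  using Bz_sets A1_sets_meas(1) An_sets_meas(1)[of n]
  by (cases "n = 0"; cases "n = 1") (auto simp: Aset_def)

lemma Aset_sub: "Aset n \<subseteq> Bz (- int n)"
  using An_sub Sn_Bz by (auto simp: Aset_def)

lemma Aset_fin: "emeasure \<mu> (Aset n) < \<infinity>"
proof -
  have "emeasure \<mu> (Aset n) \<le> emeasure \<mu> (Bz (- int n))"
    using Aset_sub Bz_sets by (rule emeasure_mono)
  then show ?thesis using Bz_fin[of "- int n"] by (simp add: less_top order.strict_trans1)
qed

lemma Aset_meas_le: "measure \<mu> (Aset n) \<le> 2 powr (real (degree p) * real n)"
proof -
  have "measure \<mu> (Aset n) \<le> measure \<mu> (Bz (- int n))"
    by (rule measure_mono_fmeasurable[OF Aset_sub Aset_sets], rule fmeasurableI[OF Bz_sets])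
      (use Bz_fin[of "- int n"] in \<open>simp add: less_top\<close>)
  then show ?thesis by (simp add: Bz_meas)
qed

lemma Aset_disj: "i \<noteq> j \<Longrightarrow> Aset i \<inter> Aset j = {}"
proof -
  assume ij: "i \<noteq> j"
  show ?thesis
  proof (cases "i = 0 \<or> j = 0")
    case True
    have key: "An k \<inter> Bz 0 = {}" if "k \<noteq> 0" for k
      using An_sub[of k] Sn_B0[of k] that by auto
    show ?thesis
    proof (cases "i = 0")
      case True
      then have "j \<noteq> 0" using ij by simp
      then show ?thesis using True key[of j] by (auto simp: Aset_def)
    next
      case False
      then have "j = 0" using \<open>i = 0 \<or> j = 0\<close> by simp
      then show ?thesis using False key[of i] by (auto simp: Aset_def)
    qed
  next
    case False
    then show ?thesis using ij An_sub Sn_unique by (auto simp: Aset_def) blast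
  qed
qed

lemma meas_A0: "measure \<mu> (Aset 0) = 1"
  by (simp add: Aset_def Bz_meas)

lemma meas_A1: "measure \<mu> (Aset 1) = 2 ^ (degree p - 1) - 1"
  using A1_sets_meas(2) by (simp add: Aset_def)

lemma meas_An: "2 \<le> n \<Longrightarrow> measure \<mu> (Aset n) = (2 ^ (degree p * n) - 2 ^ (degree p * (n - 1))) / 2"
proof -
  assume n: "2 \<le> n"
  have "measure \<mu> (Aset n) = measure \<mu> (Sn n) / 2" using An_sets_meas(2)[OF n] n by (simp add: Aset_def)
  also have "measure \<mu> (Sn n) = 2 powr (real (degree p * n)) - 2 powr (real (degree p * (n - 1)))"
    using n by (simp add: Sn_meas of_nat_diff)
  also have "\<dots> = 2 ^ (degree p * n) - 2 ^ (degree p * (n - 1))"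
    using powr_realpow[of 2 "degree p * n"] powr_realpow[of 2 "degree p * (n - 1)"] by simp
  finally show ?thesis .
qed

lemma f_val: "y \<in> Kom p \<Longrightarrow> f_om p y = (if Ln y then 0 else 1)"
  unfolding f_om_def using conic_iff by (simp add: Ln_def)

lemma one_le_2powr: "0 \<le> x \<Longrightarrow> 1 \<le> (2::real) powr x"
  using powr_mono[of 0 x 2] by simp

lemma H_B0: "y \<in> Bz 0 \<Longrightarrow> H_om p y = 1"
proof -
  assume y: "y \<in> Bz 0"
  show ?thesis
  proof (cases "y = (\<lambda>_. 0)")
    case True then show ?thesis by (simp add: H_om_def abs_om_def)
  next
    case False
    have yK: "y \<in> Kom p" using y by (simp add: Bz_iff)
    obtain k where k: "y k \<noteq> 0" "\<forall>j<k. y j = 0" using Kom_least[OF yK False] by blast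
    have "0 \<le> k" using y k by (auto simp: Bz_iff) (meson not_le)
    have "val_om y = k" using val_om_eq[OF k] .
    have "- (real (degree p) * real_of_int k) \<le> 0" using \<open>0 \<le> k\<close> by simp
    then have "2 powr (- (real (degree p) * real_of_int k)) \<le> 2 powr 0" by (intro powr_mono) simp_all
    then have "abs_om p y \<le> 1" using False \<open>val_om y = k\<close> by (simp add: abs_om_def)
    then show ?thesis by (simp add: H_om_def)
  qed
qed

lemma H_Sn: "y \<in> Sn n \<Longrightarrow> H_om p y = 2 powr (real (degree p) * real n)"
proof -
  assume y: "y \<in> Sn n"
  note L = Sn_lead[OF y]
  have nz: "y \<noteq> (\<lambda>_. 0)" using L by auto
  have "val_om y = - int n" using val_om_eq L by blast
  then have "abs_om p y = 2 powr (real (degree p) * real n)" using nz by (simp add: abs_om_def)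
  moreover have "1 \<le> 2 powr (real (degree p) * real n)" by (rule one_le_2powr) simp
  ultimately show ?thesis by (simp add: H_om_def)
qed

lemma Kom_cover: "y \<in> Kom p \<Longrightarrow> y \<notin> Bz 0 \<Longrightarrow> \<exists>n\<ge>1. y \<in> Sn n"
proof -
  assume yK: "y \<in> Kom p" and nB: "y \<notin> Bz 0"
  have nz: "y \<noteq> (\<lambda>_. 0)" using nB yK by (auto simp: Bz_iff)
  obtain k where k: "y k \<noteq> 0" "\<forall>j<k. y j = 0" using Kom_least[OF yK nz] by blast
  have "k < 0" using nB k yK by (auto simp: Bz_iff) (meson not_le order.strict_trans2)
  define n where "n = nat (- k)"
  have n: "1 \<le> n" "k = - int n" using \<open>k < 0\<close> by (auto simp: n_def)
  have "y \<in> Bz (- int n)" using yK k n by (simp add: Bz_iff)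
  moreover have "y \<notin> Bz (1 - int n)"
  proof
    assume "y \<in> Bz (1 - int n)"
    then have "y (- int n) = 0" by (simp add: Bz_iff)
    then show False using k n by simp
  qed
  ultimately show ?thesis using n unfolding Sn_def by blast
qed

context
  fixes s :: complex
  assumes sRe: "Re s > 1"
begin

definition cc :: "nat \<Rightarrow> complex" where
  "cc n = complex_of_real (2 powr (real (degree p) * real n)) powr (- s)"

definition Fi :: "nat \<Rightarrow> (int \<Rightarrow> bit poly) \<Rightarrow> complex" where
  "Fi n y = indicator (Aset n) y *\<^sub>R cc n"

definition gi :: "(int \<Rightarrow> bit poly) \<Rightarrow> complex" where
  "gi y = complex_of_real (f_om p y) * complex_of_real (H_om p y) powr (- s)"

lemma cc0: "cc 0 = 1" by (simp add: cc_def powr_def)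

lemma Fi_single:
  assumes "y \<in> Aset m" shows "(\<lambda>i. Fi i y) = (\<lambda>i. if i = m then cc m else 0)"
proof
  fix i
  show "Fi i y = (if i = m then cc m else 0)"
  proof (cases "i = m")
    case True then show ?thesis using assms by (simp add: Fi_def)
  next
    case False
    then have "y \<notin> Aset i" using assms Aset_disj[of i m] by blast
    then show ?thesis using False by (simp add: Fi_def)
  qed
qed

lemma gi_sum: "y \<in> Kom p \<Longrightarrow> gi y = (\<Sum>i. Fi i y)"
proof -
  assume yK: "y \<in> Kom p"
  show ?thesis
  proof (cases "y \<in> Bz 0")
    case True
    then have "y \<in> Aset 0" by (simp add: Aset_def)
    then have "(\<Sum>i. Fi i y) = cc 0" unfolding Fi_single[OF \<open>y \<in> Aset 0\<close>] using sums_single[of 0 "\<lambda>_. cc 0"]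
      by (simp add: sums_iff)
    moreover have "gi y = 1" using True yK Ln_B0 H_B0 by (simp add: gi_def f_val powr_def)
    ultimately show ?thesis by (simp add: cc0)
  next
    case False
    then obtain n where n: "1 \<le> n" "y \<in> Sn n" using Kom_cover[OF yK] by blast
    show ?thesis
    proof (cases "Ln y")
      case True
      have "Fi i y = 0" for i
      proof -
        have "y \<notin> Aset i"
        proof
          assume "y \<in> Aset i"
          show False
          proof (cases "i = 0")
            case True then show False using \<open>y \<in> Aset i\<close> \<open>y \<notin> Bz 0\<close> by (simp add: Aset_def)
          next
            case False
            then have "y \<in> An i" using \<open>y \<in> Aset i\<close> by (simp add: Aset_def)
            then show False using \<open>Ln y\<close> by (simp add: An_def)
          qed
        qed
        then show ?thesis by (simp add: Fi_def)
      qed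
      moreover have "gi y = 0" using True yK by (simp add: gi_def f_val)
      ultimately show ?thesis by simp
    next
      case False
      then have "y \<in> Aset n" using n by (simp add: Aset_def An_def)
      then have "(\<Sum>i. Fi i y) = cc n" unfolding Fi_single[OF \<open>y \<in> Aset n\<close>] using sums_single[of n "\<lambda>_. cc n"]
        by (simp add: sums_iff)
      moreover have "gi y = cc n" using False yK H_Sn[OF n(2)] by (simp add: gi_def f_val cc_def)
      ultimately show ?thesis by simp
    qed
  qed
qed

lemma Fi_integrable: "integrable \<mu> (Fi n)"
  unfolding Fi_def using Aset_sets Aset_fin by (intro integrable_scaleR_left integrable_real_indicator)

lemma Fi_integral: "integral\<^sup>L \<mu> (Fi n) = complex_of_real (measure \<mu> (Aset n)) * cc n"
proof -
  have "Aset n \<inter> space \<mu> = Aset n" using Aset_sets sets.sets_into_space by blast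
  then show ?thesis unfolding Fi_def by (simp add: scaleR_conv_of_real)
qed

lemma norm_cc: "norm (cc n) = 2 powr (- (real (degree p) * real n * Re s))"
proof -
  have "norm (cc n) = Re (complex_of_real (2 powr (real (degree p) * real n))) powr Re (- s)"
    unfolding cc_def by (rule norm_powr_real_powr) simp_all
  also have "\<dots> = 2 powr (- (real (degree p) * real n * Re s))" by (simp add: powr_powr)
  finally show ?thesis .
qed

lemma Fi_norm_int: "(\<integral>y. norm (Fi n y) \<partial>\<mu>) = measure \<mu> (Aset n) * norm (cc n)"
proof -
  have "(\<lambda>y. norm (Fi n y)) = (\<lambda>y. indicator (Aset n) y * norm (cc n))"
    by (auto simp: Fi_def indicator_def)
  moreover have "Aset n \<inter> space \<mu> = Aset n" using Aset_sets sets.sets_into_space by blast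
  ultimately show ?thesis by simp
qed

lemma r_lt1: "2 powr (real (degree p) * (1 - Re s)) < 1"
proof -
  have "real (degree p) * (1 - Re s) < 0" using deg_p sRe by (simp add: mult_pos_neg)
  then show ?thesis by (simp add: powr_less_one)
qed

lemma summable_norm_int: "summable (\<lambda>i. \<integral>y. norm (Fi i y) \<partial>\<mu>)"
proof (rule summable_comparison_test')
  define r where "r = 2 powr (real (degree p) * (1 - Re s))"
  show "summable (\<lambda>n. r ^ n)" using r_lt1 by (intro summable_geometric) (simp add: r_def)
  fix n :: nat
  have "norm (\<integral>y. norm (Fi n y) \<partial>\<mu>) = measure \<mu> (Aset n) * norm (cc n)"
    by (simp add: Fi_norm_int)
  also have "\<dots> \<le> 2 powr (real (degree p) * real n) * 2 powr (- (real (degree p) * real n * Re s))"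
    using Aset_meas_le by (simp add: norm_cc mult_right_mono)
  also have "\<dots> = r ^ n"
  proof -
    have "2 powr (real (degree p) * real n) * 2 powr (- (real (degree p) * real n * Re s))
        = 2 powr (real (degree p) * (1 - Re s) * real n)"
      by (simp add: powr_add[symmetric] algebra_simps)
    also have "\<dots> = (2 powr (real (degree p) * (1 - Re s))) powr real n" by (simp add: powr_powr)
    also have "\<dots> = r ^ n" by (simp add: r_def powr_realpow)
    finally show ?thesis .
  qed
  finally show "norm (\<integral>y. norm (Fi n y) \<partial>\<mu>) \<le> r ^ n" .
qed

lemma AE_summable: "AE y in \<mu>. summable (\<lambda>i. norm (Fi i y))"
proof (rule AE_I2)
  fix y assume "y \<in> space \<mu>"
  show "summable (\<lambda>i. norm (Fi i y))"
  proof (cases "\<exists>m. y \<in> Aset m")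
    case True
    then obtain m where m: "y \<in> Aset m" by blast
    have "(\<lambda>i. norm (Fi i y)) = (\<lambda>i. if i = m then norm (cc m) else 0)"
      using Fi_single[OF m] by (metis norm_zero)
    then show ?thesis using sums_single[of m "\<lambda>_. norm (cc m)"] by (simp add: sums_iff)
  next
    case False
    then have "(\<lambda>i. norm (Fi i y)) = (\<lambda>i. 0)" by (auto simp: Fi_def)
    then show ?thesis by simp
  qed
qed

lemma integral_gi: "(\<lambda>i. integral\<^sup>L \<mu> (Fi i)) sums integral\<^sup>L \<mu> gi"
proof -
  have "(\<lambda>i. integral\<^sup>L \<mu> (Fi i)) sums (\<integral>y. (\<Sum>i. Fi i y) \<partial>\<mu>)"
    using Fi_integrable AE_summable summable_norm_int by (rule sums_integral)
  moreover have "(\<integral>y. (\<Sum>i. Fi i y) \<partial>\<mu>) = integral\<^sup>L \<mu> gi"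
    by (rule Bochner_Integration.integral_cong) (simp_all add: gi_sum space_mu)
  ultimately show ?thesis by simp
qed

end
end


context hl
begin

lemma main_hl:
  assumes sRe: "Re s > 1"
  defines "aa \<equiv> exp (of_nat (degree p) * lc)" and "bb \<equiv> exp (s * of_nat (degree p) * lc)"
  shows "(LINT y|\<mu>. complex_of_real (f_om p y) * complex_of_real (H_om p y) powr (- s))
      = 1 + (aa / 2 - 1) / bb + (aa - 1) / (2 * aa) * (aa / bb)^2 / (1 - aa / bb)"
proof -
  define d where "d = degree p"
  have d1: "1 \<le> d" using deg_p by (simp add: d_def)
  have aa: "aa = complex_of_real (2 ^ d)" unfolding aa_def d_def by (rule exp_nat_lc)
  have anz: "aa \<noteq> 0" "bb \<noteq> 0" by (simp_all add: aa_def bb_def)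
  have ccv: "cc s i = (inverse bb) ^ i" for i
  proof -
    have pos: "0 < (2::real) powr (real d * real i)" by simp
    have "cc s i = exp (- s * ln (complex_of_real (2 powr (real d * real i))))"
      unfolding cc_def[OF sRe] d_def using pos by (simp add: powr_def)
    also have "ln (complex_of_real (2 powr (real d * real i))) = complex_of_real (real d * real i * ln 2)"
      using Ln_of_real[OF pos] by simp
    also have "- s * complex_of_real (real d * real i * ln 2) = of_nat i * (- (s * of_nat d * lc))"
      by (simp add: lc_def algebra_simps)
    also have "exp (of_nat i * (- (s * of_nat d * lc))) = (exp (- (s * of_nat d * lc))) ^ i"
      by (rule exp_of_nat_mult)
    finally show ?thesis by (simp add: bb_def d_def exp_minus)
  qed
  define t where "t i = complex_of_real (measure \<mu> (Aset i)) * cc s i" for i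
  have tsum: "t sums (LINT y|\<mu>. complex_of_real (f_om p y) * complex_of_real (H_om p y) powr (- s))"
    using integral_gi[OF sRe] unfolding t_def gi_def[OF sRe, abs_def] by (simp add: Fi_integral[OF sRe])
  have norm_ab: "norm (aa / bb) < 1"
  proof -
    have "norm aa = 2 ^ d" using aa by (simp add: norm_power)
    moreover have "norm bb = exp (Re s * real d * ln 2)" unfolding bb_def d_def by (simp add: lc_def)
    moreover have "exp (Re s * real d * ln 2) = 2 powr (Re s * real d)" by (simp add: powr_def)
    ultimately have "norm (aa / bb) = 2 powr (real d) / 2 powr (Re s * real d)"
      by (simp add: norm_divide powr_realpow)
    also have "\<dots> = 2 powr (real d * (1 - Re s))" by (simp add: powr_diff[symmetric] algebra_simps)
    finally show ?thesis using r_lt1[OF sRe] by (simp add: d_def)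
  qed
  have t0: "t 0 = 1" by (simp add: t_def meas_A0 ccv)
  have t1: "t 1 = (aa / 2 - 1) / bb"
  proof -
    have "(2::real) ^ d = 2 * 2 ^ (d - 1)" using d1 by (cases d) simp_all
    then have e: "complex_of_real (2 ^ (d - 1) - 1) = aa / 2 - 1" using aa by simp
    have m: "measure \<mu> (Aset 1) = 2 ^ (d - 1) - 1" using meas_A1 by (simp add: d_def)
    have "t 1 = (aa / 2 - 1) * inverse bb" unfolding t_def m e[symmetric] using ccv[of 1] by simp
    then show ?thesis by (simp only: divide_inverse)
  qed
  have tn: "t n = (aa ^ n - aa ^ (n - 1)) / 2 / bb ^ n" if n: "2 \<le> n" for n
  proof -
    have "complex_of_real ((2 ^ (d * n) - 2 ^ (d * (n - 1))) / 2) = (aa ^ n - aa ^ (n - 1)) / 2"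
      using aa by (simp add: power_mult)
    then have e: "complex_of_real ((2 ^ (d * n) - 2 ^ (d * (n - 1))) / 2) = (aa ^ n - aa ^ (n - 1)) / 2" .
    have m: "measure \<mu> (Aset n) = (2 ^ (d * n) - 2 ^ (d * (n - 1))) / 2" using meas_An[OF n] by (simp add: d_def)
    have "t n = (aa ^ n - aa ^ (n - 1)) / 2 * (inverse bb) ^ n"
      unfolding t_def m ccv e ..
    then show ?thesis by (simp only: divide_inverse power_inverse mult.assoc)
  qed
  have "t sums (1 + (aa / 2 - 1) / bb + (aa - 1) / (2 * aa) * (aa / bb)^2 / (1 - aa / bb))"
    using series_closed[OF norm_ab anz t0 t1 tn] .
  then show ?thesis using tsum sums_unique2 by blast
qed

end

lemma two_powr_facts:
  fixes s :: complex and d :: nat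
  shows "2 powr ((s - 1) * of_nat d) = exp (s * of_nat d * lc) / exp (of_nat d * lc)"
    and "2 powr (- of_nat d) = inverse (exp (of_nat d * lc))"
    and "2 powr (s * of_nat d - 1) = exp (s * of_nat d * lc) / 2"
    and "2 powr (of_nat d - 1) = exp (of_nat d * lc) / 2"
    and "2 powr (- (s - 1) * of_nat d) = exp (of_nat d * lc) / exp (s * of_nat d * lc)"
proof -
  have "(s - 1) * of_nat d * lc = s * of_nat d * lc - of_nat d * lc" by (simp add: algebra_simps)
  then show "2 powr ((s - 1) * of_nat d) = exp (s * of_nat d * lc) / exp (of_nat d * lc)" by (simp add: two_powr_c exp_diff )
  have "- of_nat d * lc = - (of_nat d * lc)" by simp
  then show "2 powr (- of_nat d) = inverse (exp (of_nat d * lc))" by (simp add: two_powr_c exp_minus)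
  have "(s * of_nat d - 1) * lc = s * of_nat d * lc - lc" by (simp add: algebra_simps)
  then show "2 powr (s * of_nat d - 1) = exp (s * of_nat d * lc) / 2" by (simp add: two_powr_c exp_diff exp_lc)
  have "(of_nat d - 1) * lc = of_nat d * lc - lc" by (simp add: algebra_simps)
  then show "2 powr (of_nat d - 1) = exp (of_nat d * lc) / 2" by (simp add: two_powr_c exp_diff exp_lc)
  have "(- (s - 1) * of_nat d) * lc = of_nat d * lc - s * of_nat d * lc" by (simp add: algebra_simps)
  then show "2 powr (- (s - 1) * of_nat d) = exp (of_nat d * lc) / exp (s * of_nat d * lc)" by (simp add: two_powr_c exp_diff)
qed

theorem lemma4p2:
  fixes p :: "bit poly" and \<mu> :: "(int \<Rightarrow> bit poly) measure" and s :: complex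
  assumes "irreducible p" and "lead_coeff p = 1" and "p \<noteq> tpoly"
    and "haar_om p \<mu>" and "Re s > 1"
  shows "(LINT y|\<mu>. complex_of_real (f_om p y) * complex_of_real (H_om p y) powr (- s))
           = 1 + 1/2 * (1 / 2 powr ((s - 1) * of_nat (degree p))
                 * (1 + (1 - 2 powr (- of_nat (degree p))) / (2 powr ((s - 1) * of_nat (degree p)) - 1))
               - 1 / 2 powr (s * of_nat (degree p) - 1))
       \<and> (LINT y|\<mu>. complex_of_real (f_om p y) * complex_of_real (H_om p y) powr (- s))
           = 1 + 1/2 * (1 / 2 powr ((s - 1) * of_nat (degree p)))
               * (1 - 1 / 2 powr (of_nat (degree p) - 1)
                  + (1 - 2 powr (- of_nat (degree p)))
                    / (2 powr ((s - 1) * of_nat (degree p)) * (1 - 2 powr (- (s - 1) * of_nat (degree p)))))"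
proof -
  interpret hl p \<mu> using assms(1,3,4) by unfold_locales
  define aa where "aa = exp (of_nat (degree p) * lc)"
  define bb where "bb = exp (s * of_nat (degree p) * lc)"
  have M: "(LINT y|\<mu>. complex_of_real (f_om p y) * complex_of_real (H_om p y) powr (- s))
      = 1 + (aa / 2 - 1) / bb + (aa - 1) / (2 * aa) * (aa / bb)^2 / (1 - aa / bb)"
    unfolding aa_def bb_def by (rule main_hl[OF assms(5)])
  have anz: "aa \<noteq> 0" "bb \<noteq> 0" by (simp_all add: aa_def bb_def)
  have "bb \<noteq> aa"
  proof
    assume "bb = aa"
    have "norm (aa / bb) < 1"
    proof -
      have "norm aa = 2 ^ degree p" unfolding aa_def by (simp add: exp_nat_lc norm_power)
      moreover have "norm bb = exp (Re s * real (degree p) * ln 2)" unfolding bb_def by (simp add: lc_def)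
      moreover have "exp (Re s * real (degree p) * ln 2) = 2 powr (Re s * real (degree p))" by (simp add: powr_def)
      ultimately have "norm (aa / bb) = 2 powr (real (degree p)) / 2 powr (Re s * real (degree p))"
        by (simp add: norm_divide powr_realpow)
      also have "\<dots> = 2 powr (real (degree p) * (1 - Re s))" by (simp add: powr_diff[symmetric] algebra_simps)
      finally show ?thesis using r_lt1[OF assms(5)] by simp
    qed
    then show False using \<open>bb = aa\<close> anz by simp
  qed
  have F1: "2 powr ((s - 1) * of_nat (degree p)) = bb / aa" unfolding aa_def bb_def by (rule two_powr_facts(1))
  have F2: "2 powr (- of_nat (degree p)) = inverse aa" unfolding aa_def by (rule two_powr_facts(2))
  have F3: "2 powr (s * of_nat (degree p) - 1) = bb / 2" unfolding bb_def by (rule two_powr_facts(3))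
  have F4: "2 powr (of_nat (degree p) - 1) = aa / 2" unfolding aa_def by (rule two_powr_facts(4))
  have F5: "2 powr (- (s - 1) * of_nat (degree p)) = aa / bb" unfolding aa_def bb_def by (rule two_powr_facts(5))
  show ?thesis
    unfolding M F1 F2 F3 F4 F5 by (rule conjI) (rule final_algebra[OF anz \<open>bb \<noteq> aa\<close>])+
qed



end
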